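(* Fix $\Theta\in\Omega$ with $\mu$, $(Y_i)_{i\ge0}$ as in the setup. Almost surely there exists $L_0\in\mathbb R^+$ such that for every $l\ge L_0$ and every $i\in\mathbb N$ with $Y_i\ge l$, $$\mu(Y_i,Y_{i+1}]\le\frac{\log^2 l}{l}.$$
   Context: Let $\Omega$ be the set of sequences $\Theta=(\theta_i)_{i\ge 0}$ of nonnegative reals with $\sum_{i\ge0}\theta_i^2=1$, $\theta_1\ge\theta_2\ge\cdots$, and either $\theta_0\ne0$ or $\sum_{i\ge1}\theta_i=\infty$. For $\Theta\in\Omega$, let $(X_i)_{i\ge1}$ be independent exponential random variables with respective rates $\theta_i$ (a rate-$0$ variable equals $+\infty$), and let $\mu:=\theta_0^2\,dx+\sum_{i\ge1}\theta_i\delta_{X_i}$, a random measure on $\mathbb R^+$ (a.s. $\mu[0,l]<\infty$ for all $l$). Conditionally on $\mu$, let $Y_1<Y_2<\cdots$ be the points of a Poisson point process on $\mathbb R^+$ with intensity $\mu[0,l]\,dl$ (the "cuts"), and set $Y_0:=0$. *)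

theory Defs
  imports "HOL-Probability.Probability"
begin

text \<open>The parameter set Omega: theta 0 is the diffuse part, theta 1, theta 2, ... the atoms.\<close>
definition Omega_param :: "(nat \<Rightarrow> real) \<Rightarrow> bool" where
  "Omega_param \<theta> \<longleftrightarrow>
     (\<forall>i. 0 \<le> \<theta> i) \<and> ((\<lambda>i. (\<theta> i)\<^sup>2) sums 1) \<and>
     (\<forall>i\<ge>1. \<theta> (Suc i) \<le> \<theta> i) \<and>
     (\<theta> 0 \<noteq> 0 \<or> \<not> summable (\<lambda>i. \<theta> (Suc i)))"

text \<open>mu(a,b] = theta0^2 (b-a) + sum over i>=1 of theta_i [a < X_i <= b] (for a <= b).
  Atoms with rate theta_i = 0 (X_i = +infinity) carry weight 0, so the value of X_i is irrelevant then.\<close>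
definition mu_Ioc :: "(nat \<Rightarrow> real) \<Rightarrow> (nat \<Rightarrow> real) \<Rightarrow> real \<Rightarrow> real \<Rightarrow> ennreal" where
  "mu_Ioc \<theta> x a b =
     ennreal ((\<theta> 0)\<^sup>2 * (b - a)) +
     (\<Sum>i. ennreal (\<theta> (Suc i) * indicator {a<..b} (x (Suc i))))"

definition mu_Icc0 :: "(nat \<Rightarrow> real) \<Rightarrow> (nat \<Rightarrow> real) \<Rightarrow> real \<Rightarrow> ennreal" where
  "mu_Icc0 \<theta> x l =
     ennreal ((\<theta> 0)\<^sup>2 * l) +
     (\<Sum>i. ennreal (\<theta> (Suc i) * indicator {0..l} (x (Suc i))))"

definition cum_intensity :: "(nat \<Rightarrow> real) \<Rightarrow> (nat \<Rightarrow> real) \<Rightarrow> real \<Rightarrow> ennreal" where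
  "cum_intensity \<theta> x l = (\<integral>\<^sup>+ s. mu_Icc0 \<theta> x s * indicator {0..l} s \<partial>lborel)"

text \<open>The cuts, by time change of a unit-rate Poisson process with inter-arrival times e 0, e 1, ...:
  Y 0 = 0 and Y k = inf { l >= 0 : Lambda(l) >= e 0 + ... + e (k-1) } for k >= 1.\<close>
definition cuts :: "(nat \<Rightarrow> real) \<Rightarrow> (nat \<Rightarrow> real) \<Rightarrow> (nat \<Rightarrow> real) \<Rightarrow> nat \<Rightarrow> real" where
  "cuts \<theta> x e k =
     (if k = 0 then 0
      else Inf {l. 0 \<le> l \<and> ennreal (\<Sum>j<k. e j) \<le> cum_intensity \<theta> x l})"

end

theory Submission
  imports Defs
begin

lemma markov_enn:
  assumes [measurable]: "f \<in> borel_measurable M"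
  shows "c * emeasure M {x\<in>space M. c \<le> f x} \<le> (\<integral>\<^sup>+x. f x \<partial>M)"
proof -
  have S: "{x\<in>space M. c \<le> f x} \<in> sets M" by measurable
  have "c * emeasure M {x\<in>space M. c \<le> f x} = (\<integral>\<^sup>+x. c * indicator {x\<in>space M. c \<le> f x} x \<partial>M)"
    using S by (simp add: nn_integral_cmult_indicator)
  also have "\<dots> \<le> (\<integral>\<^sup>+x. f x \<partial>M)"
    by (intro nn_integral_mono) (auto split: split_indicator)
  finally show ?thesis .
qed

locale cutsetup = prob_space M for M :: "'a measure" +
  fixes \<theta> :: "nat \<Rightarrow> real" and X E :: "nat \<Rightarrow> 'a \<Rightarrow> real"
  assumes Om: "Omega_param \<theta>"
    and Xd: "\<And>i. i \<ge> 1 \<Longrightarrow> 0 < \<theta> i \<Longrightarrow> distributed M lborel (X i) (exponential_density (\<theta> i))"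
    and Xm[measurable]: "\<And>i. i \<ge> 1 \<Longrightarrow> X i \<in> borel_measurable M"
    and Ed: "\<And>j. distributed M lborel (E j) (exponential_density 1)"
    and ind: "indep_vars (\<lambda>_. borel) (\<lambda>k. case k of Inl i \<Rightarrow> X i | Inr j \<Rightarrow> E j) (Inl ` {1..} \<union> Inr ` UNIV)"
begin

lemma Em[measurable]: "E j \<in> borel_measurable M"
  using Ed[of j] by (simp add: distributed_def)

lemma th_nonneg: "0 \<le> \<theta> i"
  using Om by (simp add: Omega_param_def)

lemma th_sums: "(\<lambda>i. (\<theta> i)\<^sup>2) sums 1"
  using Om by (simp add: Omega_param_def)

lemma th_summable: "summable (\<lambda>i. (\<theta> i)\<^sup>2)"
  using th_sums sums_summable by blast

lemma th_mono: assumes "1 \<le> i" "i \<le> j" shows "\<theta> j \<le> \<theta> i"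
proof -
  have st: "\<And>n. 1 \<le> n \<Longrightarrow> \<theta> (Suc n) \<le> \<theta> n" using Om by (simp add: Omega_param_def)
  show ?thesis using assms(2)
  proof (induction j rule: dec_induct)
    case base then show ?case by simp
  next
    case (step n) then show ?case using \<open>1 \<le> i\<close> st[of n] by linarith
  qed
qed

lemma th_le1: "\<theta> i \<le> 1"
proof -
  have "(\<Sum>j\<in>{i}. (\<theta> j)\<^sup>2) \<le> (\<Sum>i. (\<theta> i)\<^sup>2)"
    using th_summable by (intro sum_le_suminf) auto
  also have "\<dots> = 1" using th_sums sums_unique by metis
  finally have "(\<theta> i)\<^sup>2 \<le> 1" by simp
  then show ?thesis using th_nonneg[of i] by (simp add: power_le_one_iff abs_le_square_iff)
qed

lemma th1_zero: assumes "\<theta> 1 = 0" "1 \<le> i" shows "\<theta> i = 0"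
  using th_mono[of 1 i] th_nonneg[of i] assms by simp

lemma th0_pos_if: assumes "\<theta> 1 = 0" shows "\<theta> 0 \<noteq> 0"
proof -
  have "summable (\<lambda>i. \<theta> (Suc i))" using th1_zero[OF assms] by simp
  then show ?thesis using Om by (auto simp: Omega_param_def)
qed

lemma prod_X:
  assumes J: "finite J" "J \<subseteq> {1..}"
    and g[measurable]: "\<And>i. g i \<in> borel_measurable (borel :: real measure)"
  shows "(\<integral>\<^sup>+\<omega>. (\<Prod>i\<in>J. g i (X i \<omega>)) \<partial>M) = (\<Prod>i\<in>J. \<integral>\<^sup>+\<omega>. g i (X i \<omega>) \<partial>M)"
proof -
  let ?Z = "\<lambda>k. case k of Inl i \<Rightarrow> X i | Inr j \<Rightarrow> E j"
  let ?G = "\<lambda>k. case k of Inl i \<Rightarrow> g i | Inr j \<Rightarrow> g 0"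
  have i1: "indep_vars (\<lambda>_. borel) ?Z (Inl ` J)"
    by (rule indep_vars_subset[OF ind]) (use J in auto)
  have i2: "indep_vars (\<lambda>_. borel) (\<lambda>k. ?G k \<circ> ?Z k) (Inl ` J)"
    by (rule indep_vars_compose[OF i1]) (auto split: sum.split)
  have "(\<integral>\<^sup>+\<omega>. (\<Prod>k\<in>Inl ` J. (?G k \<circ> ?Z k) \<omega>) \<partial>M) = (\<Prod>k\<in>Inl ` J. \<integral>\<^sup>+\<omega>. (?G k \<circ> ?Z k) \<omega> \<partial>M)"
    by (rule indep_vars_nn_integral[OF _ i2]) (use J in auto)
  then show ?thesis
    by (simp add: prod.reindex)
qed

lemma prod_E:
  assumes J: "finite J"
    and g[measurable]: "\<And>i. g i \<in> borel_measurable (borel :: real measure)"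
  shows "(\<integral>\<^sup>+\<omega>. (\<Prod>i\<in>J. g i (E i \<omega>)) \<partial>M) = (\<Prod>i\<in>J. \<integral>\<^sup>+\<omega>. g i (E i \<omega>) \<partial>M)"
proof -
  let ?Z = "\<lambda>k. case k of Inl i \<Rightarrow> X i | Inr j \<Rightarrow> E j"
  let ?G = "\<lambda>k. case k of Inl i \<Rightarrow> g 0 | Inr j \<Rightarrow> g j"
  have i1: "indep_vars (\<lambda>_. borel) ?Z (Inr ` J)"
    by (rule indep_vars_subset[OF ind]) (use J in auto)
  have i2: "indep_vars (\<lambda>_. borel) (\<lambda>k. ?G k \<circ> ?Z k) (Inr ` J)"
    by (rule indep_vars_compose[OF i1]) (auto split: sum.split)
  have "(\<integral>\<^sup>+\<omega>. (\<Prod>k\<in>Inr ` J. (?G k \<circ> ?Z k) \<omega>) \<partial>M) = (\<Prod>k\<in>Inr ` J. \<integral>\<^sup>+\<omega>. (?G k \<circ> ?Z k) \<omega> \<partial>M)"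
    by (rule indep_vars_nn_integral[OF _ i2]) (use J in auto)
  then show ?thesis
    by (simp add: prod.reindex)
qed

end

context cutsetup begin

lemma exp_ind_integral:
  assumes [measurable]: "Z \<in> borel_measurable M" "W \<in> sets borel"
  shows "(\<integral>\<^sup>+\<omega>. ennreal (exp (c * indicator W (Z \<omega>))) \<partial>M) = ennreal (1 + (exp c - 1) * prob {\<omega>\<in>space M. Z \<omega> \<in> W})"
proof -
  let ?A = "{\<omega>\<in>space M. Z \<omega> \<in> W}"
  have A: "?A \<in> events" by measurable
  have "(\<integral>\<^sup>+\<omega>. ennreal (exp (c * indicator W (Z \<omega>))) \<partial>M) = (\<integral>\<^sup>+\<omega>. ennreal (exp c) * indicator ?A \<omega> + indicator (space M - ?A) \<omega> \<partial>M)"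
    by (intro nn_integral_cong) (auto split: split_indicator)
  also have "\<dots> = ennreal (exp c) * emeasure M ?A + emeasure M (space M - ?A)"
    using A by (subst nn_integral_add) (auto simp: nn_integral_cmult_indicator)
  also have "\<dots> = ennreal (exp c * prob ?A + (1 - prob ?A))"
    using A by (simp add: emeasure_eq_measure prob_compl ennreal_mult ennreal_plus)
  also have "exp c * prob ?A + (1 - prob ?A) = 1 + (exp c - 1) * prob ?A"
    by (simp add: algebra_simps)
  finally show ?thesis .
qed

lemma X_gt: assumes "1 \<le> i" "0 < \<theta> i" "0 \<le> a"
  shows "prob {\<omega>\<in>space M. a < X i \<omega>} = exp (- a * \<theta> i)"
  using exponential_distributedD_gt[OF Xd[OF assms(1,2)] assms(3) assms(2)] by simp

lemma X_le: assumes "1 \<le> i" "0 < \<theta> i" "0 \<le> a"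
  shows "prob {\<omega>\<in>space M. X i \<omega> \<le> a} = 1 - exp (- a * \<theta> i)"
  using exponential_distributedD_le[OF Xd[OF assms(1,2)] assms(3) assms(2)] by simp

lemma X_nonneg_AE: assumes "1 \<le> i" "0 < \<theta> i"
  shows "AE \<omega> in M. 0 \<le> X i \<omega>"
proof -
  have [measurable]: "X i \<in> borel_measurable M" using Xm assms by simp
  have "prob {\<omega>\<in>space M. X i \<omega> \<le> 0} = 0" using X_le[OF assms, of 0] by simp
  moreover have "{\<omega>\<in>space M. X i \<omega> \<le> 0} \<in> events" by measurable
  ultimately have "{\<omega>\<in>space M. X i \<omega> \<le> 0} \<in> null_sets M"
    by (simp add: null_sets_def emeasure_eq_measure)
  then show ?thesis
    by (rule AE_I'[where N="{\<omega>\<in>space M. X i \<omega> \<le> 0}"]) auto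
qed

lemma X_window: assumes "1 \<le> i" "0 < \<theta> i" "0 \<le> u" "u \<le> v"
  shows "prob {\<omega>\<in>space M. X i \<omega> \<in> {u<..v}} = exp (- u * \<theta> i) - exp (- v * \<theta> i)"
proof -
  have "{\<omega>\<in>space M. X i \<omega> \<in> {u<..v}} = {\<omega>\<in>space M. u < X i \<omega>} - {\<omega>\<in>space M. v < X i \<omega>}"
    by auto
  moreover have "{\<omega>\<in>space M. v < X i \<omega>} \<subseteq> {\<omega>\<in>space M. u < X i \<omega>}" using assms by auto
  ultimately have "prob {\<omega>\<in>space M. X i \<omega> \<in> {u<..v}} = prob {\<omega>\<in>space M. u < X i \<omega>} - prob {\<omega>\<in>space M. v < X i \<omega>}"
    using assms by (simp add: finite_measure_Diff)
  then show ?thesis using X_gt assms by simp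
qed

lemma X_window_le: assumes "1 \<le> i" "0 \<le> u" "u \<le> v"
  shows "prob {\<omega>\<in>space M. X i \<omega> \<in> {u<..v}} * \<theta> i \<le> \<theta> i * ((v - u) * \<theta> i * exp (- u * \<theta> i))"
proof (cases "\<theta> i = 0")
  case True then show ?thesis by simp
next
  case False
  then have th: "0 < \<theta> i" using th_nonneg[of i] by simp
  have "exp (- u * \<theta> i) - exp (- v * \<theta> i) = exp (- u * \<theta> i) * (1 - exp (- ((v - u) * \<theta> i)))"
    by (simp add: algebra_simps flip: exp_add)
  also have "\<dots> \<le> exp (- u * \<theta> i) * ((v - u) * \<theta> i)"
    using exp_ge_add_one_self[of "- ((v - u) * \<theta> i)"] by (intro mult_left_mono) auto
  finally show ?thesis using X_window[OF assms(1) th assms(2,3)] th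
    by (simp add: mult_ac)
qed

lemma X_Icc: assumes "1 \<le> i" "0 < \<theta> i" "0 \<le> x"
  shows "prob {\<omega>\<in>space M. X i \<omega> \<in> {0..x}} = 1 - exp (- x * \<theta> i)"
proof -
  have [measurable]: "X i \<in> borel_measurable M" using Xm assms by simp
  have "prob {\<omega>\<in>space M. X i \<omega> \<in> {0..x}} = prob {\<omega>\<in>space M. X i \<omega> \<le> x}"
    by (rule finite_measure_eq_AE) (use X_nonneg_AE[OF assms(1,2)] in auto)
  then show ?thesis using X_le assms by simp
qed

lemma E_gt: assumes "0 \<le> a" shows "prob {\<omega>\<in>space M. a < E j \<omega>} = exp (- a)"
  using exponential_distributedD_gt[OF Ed[of j] assms] by simp

lemma E_nonneg_AE: "AE \<omega> in M. 0 \<le> E j \<omega>"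
proof -
  have "prob {\<omega>\<in>space M. E j \<omega> \<le> 0} = 0"
    using exponential_distributedD_le[OF Ed[of j], of 0] by simp
  moreover have "{\<omega>\<in>space M. E j \<omega> \<le> 0} \<in> events" by measurable
  ultimately have "{\<omega>\<in>space M. E j \<omega> \<le> 0} \<in> null_sets M"
    by (simp add: null_sets_def emeasure_eq_measure)
  then show ?thesis
    by (rule AE_I'[where N="{\<omega>\<in>space M. E j \<omega> \<le> 0}"]) auto
qed

end

context cutsetup begin

lemma sumX_meas[measurable]:
  assumes "J \<subseteq> {1..}" "W \<in> sets borel"
  shows "(\<lambda>\<omega>. \<Sum>i\<in>J. \<theta> i * indicator W (X i \<omega>)) \<in> borel_measurable M"
proof (intro borel_measurable_sum)
  fix i assume "i \<in> J"
  then have [measurable]: "X i \<in> borel_measurable M" using assms Xm by auto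
  show "(\<lambda>\<omega>. \<theta> i * indicator W (X i \<omega>)) \<in> borel_measurable M" using assms by measurable
qed

lemma chernoff_gen:
  assumes J: "finite J" "J \<subseteq> {1..}" and W[measurable]: "W \<in> sets borel"
  shows "prob {\<omega>\<in>space M. exp (c * t) \<le> exp (c * (\<Sum>i\<in>J. \<theta> i * indicator W (X i \<omega>)))}
     \<le> exp (- c * t + (\<Sum>i\<in>J. prob {\<omega>\<in>space M. X i \<omega> \<in> W} * (exp (c * \<theta> i) - 1)))"
proof -
  let ?A = "\<lambda>\<omega>. \<Sum>i\<in>J. \<theta> i * indicator W (X i \<omega>)"
  let ?p = "\<lambda>i. prob {\<omega>\<in>space M. X i \<omega> \<in> W}"
  let ?S = "\<lambda>\<omega>. exp (c * ?A \<omega>)"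
  have Am[measurable]: "?A \<in> borel_measurable M" by (rule sumX_meas[OF J(2) W])
  have "(\<integral>\<^sup>+\<omega>. ennreal (?S \<omega>) \<partial>M) = (\<integral>\<^sup>+\<omega>. (\<Prod>i\<in>J. ennreal (exp ((c * \<theta> i) * indicator W (X i \<omega>)))) \<partial>M)"
    by (intro nn_integral_cong)
       (simp add: sum_distrib_left exp_sum[OF J(1)] prod_ennreal mult.assoc)
  also have "\<dots> = (\<Prod>i\<in>J. \<integral>\<^sup>+\<omega>. ennreal (exp ((c * \<theta> i) * indicator W (X i \<omega>))) \<partial>M)"
    by (rule prod_X[OF J]) measurable
  also have "\<dots> = (\<Prod>i\<in>J. ennreal (1 + (exp (c * \<theta> i) - 1) * ?p i))"
  proof (intro prod.cong refl)
    fix i assume "i \<in> J"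
    then have [measurable]: "X i \<in> borel_measurable M" using J Xm by auto
    show "(\<integral>\<^sup>+\<omega>. ennreal (exp ((c * \<theta> i) * indicator W (X i \<omega>))) \<partial>M) = ennreal (1 + (exp (c * \<theta> i) - 1) * ?p i)"
      by (rule exp_ind_integral) measurable
  qed
  also have "\<dots> \<le> (\<Prod>i\<in>J. ennreal (exp (?p i * (exp (c * \<theta> i) - 1))))"
  proof (intro prod_mono_ennreal)
    fix i assume "i \<in> J"
    show "ennreal (1 + (exp (c * \<theta> i) - 1) * ?p i) \<le> ennreal (exp (?p i * (exp (c * \<theta> i) - 1)))"
      using exp_ge_add_one_self[of "?p i * (exp (c * \<theta> i) - 1)"]
      by (intro ennreal_leI) (simp add: mult.commute)
  qed
  also have "\<dots> = ennreal (exp (\<Sum>i\<in>J. ?p i * (exp (c * \<theta> i) - 1)))"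
    by (simp add: exp_sum[OF J(1)] prod_ennreal)
  finally have I: "(\<integral>\<^sup>+\<omega>. ennreal (?S \<omega>) \<partial>M) \<le> ennreal (exp (\<Sum>i\<in>J. ?p i * (exp (c * \<theta> i) - 1)))" .
  have "ennreal (exp (c * t)) * emeasure M {\<omega>\<in>space M. ennreal (exp (c * t)) \<le> ennreal (?S \<omega>)} \<le> (\<integral>\<^sup>+\<omega>. ennreal (?S \<omega>) \<partial>M)"
    by (rule markov_enn) measurable
  also note I
  finally have II: "ennreal (exp (c * t)) * emeasure M {\<omega>\<in>space M. ennreal (exp (c * t)) \<le> ennreal (?S \<omega>)}
     \<le> ennreal (exp (\<Sum>i\<in>J. ?p i * (exp (c * \<theta> i) - 1)))" .
  have "{\<omega>\<in>space M. ennreal (exp (c * t)) \<le> ennreal (?S \<omega>)} = {\<omega>\<in>space M. exp (c * t) \<le> ?S \<omega>}"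
    by (auto simp: ennreal_le_iff)
  with II have "exp (c * t) * prob {\<omega>\<in>space M. exp (c * t) \<le> ?S \<omega>} \<le> exp (\<Sum>i\<in>J. ?p i * (exp (c * \<theta> i) - 1))"
    by (simp add: emeasure_eq_measure ennreal_mult[symmetric] ennreal_le_iff del: ennreal_mult')
  then have "prob {\<omega>\<in>space M. exp (c * t) \<le> ?S \<omega>} \<le> exp (\<Sum>i\<in>J. ?p i * (exp (c * \<theta> i) - 1)) / exp (c * t)"
    by (simp add: field_simps)
  also have "\<dots> = exp (- c * t + (\<Sum>i\<in>J. ?p i * (exp (c * \<theta> i) - 1)))"
    by (subst exp_diff[symmetric]) (simp add: algebra_simps)
  finally show ?thesis .
qed

lemma chernoff_upper:
  assumes J: "finite J" "J \<subseteq> {1..}" and W[measurable]: "W \<in> sets borel" and l: "0 \<le> l"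
  shows "prob {\<omega>\<in>space M. t < (\<Sum>i\<in>J. \<theta> i * indicator W (X i \<omega>))}
     \<le> exp (- l * t + (\<Sum>i\<in>J. prob {\<omega>\<in>space M. X i \<omega> \<in> W} * (exp (l * \<theta> i) - 1)))"
proof -
  have Am[measurable]: "(\<lambda>\<omega>. \<Sum>i\<in>J. \<theta> i * indicator W (X i \<omega>)) \<in> borel_measurable M" by (rule sumX_meas[OF J(2) W])
  have "prob {\<omega>\<in>space M. t < (\<Sum>i\<in>J. \<theta> i * indicator W (X i \<omega>))}
    \<le> prob {\<omega>\<in>space M. exp (l * t) \<le> exp (l * (\<Sum>i\<in>J. \<theta> i * indicator W (X i \<omega>)))}"
    using l by (intro finite_measure_mono) (auto intro: mult_left_mono)
  also have "\<dots> \<le> exp (- l * t + (\<Sum>i\<in>J. prob {\<omega>\<in>space M. X i \<omega> \<in> W} * (exp (l * \<theta> i) - 1)))" by (rule chernoff_gen[OF J W])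
  finally show ?thesis .
qed

lemma chernoff_lower:
  assumes J: "finite J" "J \<subseteq> {1..}" and W[measurable]: "W \<in> sets borel" and l: "0 \<le> l"
  shows "prob {\<omega>\<in>space M. (\<Sum>i\<in>J. \<theta> i * indicator W (X i \<omega>)) < s}
     \<le> exp (l * s - (\<Sum>i\<in>J. prob {\<omega>\<in>space M. X i \<omega> \<in> W} * (1 - exp (- l * \<theta> i))))"
proof -
  have Am[measurable]: "(\<lambda>\<omega>. \<Sum>i\<in>J. \<theta> i * indicator W (X i \<omega>)) \<in> borel_measurable M" by (rule sumX_meas[OF J(2) W])
  have "prob {\<omega>\<in>space M. (\<Sum>i\<in>J. \<theta> i * indicator W (X i \<omega>)) < s}
    \<le> prob {\<omega>\<in>space M. exp ((-l) * s) \<le> exp ((-l) * (\<Sum>i\<in>J. \<theta> i * indicator W (X i \<omega>)))}"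
    using l by (intro finite_measure_mono) (auto intro: mult_left_mono)
  also have "\<dots> \<le> exp (- (-l) * s + (\<Sum>i\<in>J. prob {\<omega>\<in>space M. X i \<omega> \<in> W} * (exp ((-l) * \<theta> i) - 1)))"
    by (rule chernoff_gen[OF J W])
  also have "\<dots> = exp (l * s - (\<Sum>i\<in>J. prob {\<omega>\<in>space M. X i \<omega> \<in> W} * (1 - exp (- l * \<theta> i))))"
    by (simp add: sum_subtractf algebra_simps sum_negf[symmetric])
  finally show ?thesis .
qed

end

definition AS :: "(nat \<Rightarrow> real) \<Rightarrow> (nat \<Rightarrow> real) \<Rightarrow> real set \<Rightarrow> ennreal" where
  "AS th x W = (\<Sum>i. ennreal (th (Suc i) * indicator W (x (Suc i))))"

lemma AS_SUP:
  assumes "\<And>i. 0 \<le> th i"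
  shows "AS th x W = (SUP n. ennreal (\<Sum>i\<in>{1..n}. th i * indicator W (x i)))"
proof -
  have "AS th x W = (SUP n. \<Sum>i<n. ennreal (th (Suc i) * indicator W (x (Suc i))))"
    unfolding AS_def by (rule suminf_eq_SUP)
  also have "\<dots> = (SUP n. ennreal (\<Sum>i\<in>{1..n}. th i * indicator W (x i)))"
    using assms by (simp add: sum_ennreal sum.atLeast1_atMost_eq)
  finally show ?thesis .
qed

lemma AS_mono:
  assumes "\<And>i. 0 \<le> th i" "W \<subseteq> V"
  shows "AS th x W \<le> AS th x V"
  unfolding AS_def using assms
  by (intro suminf_le) (auto intro!: ennreal_leI mult_left_mono split: split_indicator)

lemma mu_Ioc_AS: "mu_Ioc th x a b = ennreal ((th 0)\<^sup>2 * (b - a)) + AS th x {a<..b}"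
  by (simp add: mu_Ioc_def AS_def)

lemma mu_Icc0_AS: "mu_Icc0 th x l = ennreal ((th 0)\<^sup>2 * l) + AS th x {0..l}"
  by (simp add: mu_Icc0_def AS_def)

context cutsetup begin

lemma AS_meas[measurable]:
  assumes "W \<in> sets borel"
  shows "(\<lambda>\<omega>. AS \<theta> (\<lambda>n. X n \<omega>) W) \<in> borel_measurable M"
proof -
  have "(\<lambda>\<omega>. AS \<theta> (\<lambda>n. X n \<omega>) W) = (\<lambda>\<omega>. SUP n. ennreal (\<Sum>i\<in>{1..n}. \<theta> i * indicator W (X i \<omega>)))"
    using th_nonneg by (simp add: AS_SUP)
  also have "\<dots> \<in> borel_measurable M"
    using sumX_meas[OF _ assms] by measurable
  finally show ?thesis .
qed

lemma tail_upper:
  assumes W[measurable]: "W \<in> sets borel" and l: "0 \<le> l" and t: "0 \<le> t"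
    and B: "\<And>n. (\<Sum>i\<in>{1..n}. prob {\<omega>\<in>space M. X i \<omega> \<in> W} * (exp (l * \<theta> i) - 1)) \<le> B"
  shows "prob {\<omega>\<in>space M. ennreal t < AS \<theta> (\<lambda>n. X n \<omega>) W} \<le> exp (- l * t + B)"
proof -
  let ?P = "\<lambda>n \<omega>. \<Sum>i\<in>{1..n}. \<theta> i * indicator W (X i \<omega>)"
  let ?A = "\<lambda>n. {\<omega>\<in>space M. t < ?P n \<omega>}"
  have Pm[measurable]: "\<And>n. ?P n \<in> borel_measurable M" by (rule sumX_meas) auto
  have eq: "{\<omega>\<in>space M. ennreal t < AS \<theta> (\<lambda>n. X n \<omega>) W} = (\<Union>n. ?A n)"
  proof -
    have "ennreal t < AS \<theta> (\<lambda>n. X n \<omega>) W \<longleftrightarrow> (\<exists>n. t < ?P n \<omega>)" for \<omega>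
    proof -
      have "ennreal t < AS \<theta> (\<lambda>n. X n \<omega>) W \<longleftrightarrow> (\<exists>n. ennreal t < ennreal (?P n \<omega>))"
        using th_nonneg by (simp add: AS_SUP less_SUP_iff)
      also have "\<dots> \<longleftrightarrow> (\<exists>n. t < ?P n \<omega>)"
        using t by (simp add: ennreal_less_iff)
      finally show ?thesis .
    qed
    then show ?thesis by auto
  qed
  have inc: "incseq ?A"
  proof (rule incseq_SucI)
    fix n
    have "?P n \<omega> \<le> ?P (Suc n) \<omega>" for \<omega>
      by (intro sum_mono2) (auto simp: th_nonneg)
    then show "?A n \<subseteq> ?A (Suc n)" by (auto intro: less_le_trans)
  qed
  have Am: "\<And>n. ?A n \<in> events" by measurable
  have "(\<lambda>n. prob (?A n)) \<longlonglongrightarrow> prob (\<Union>n. ?A n)"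
    by (rule finite_Lim_measure_incseq[OF _ inc]) (use Am in blast)
  moreover have "prob (?A n) \<le> exp (- l * t + B)" for n
  proof -
    have "prob (?A n) \<le> exp (- l * t + (\<Sum>i\<in>{1..n}. prob {\<omega>\<in>space M. X i \<omega> \<in> W} * (exp (l * \<theta> i) - 1)))"
      by (rule chernoff_upper[OF _ _ W l]) auto
    also have "\<dots> \<le> exp (- l * t + B)" using B[of n] by simp
    finally show ?thesis .
  qed
  ultimately have "prob (\<Union>n. ?A n) \<le> exp (- l * t + B)"
    by (intro LIMSEQ_le_const2) auto
  then show ?thesis using eq by simp
qed

lemma tail_lower:
  assumes W[measurable]: "W \<in> sets borel" and l: "0 \<le> l"
    and Q: "(\<lambda>n. \<Sum>i\<in>{1..n}. prob {\<omega>\<in>space M. X i \<omega> \<in> W} * (1 - exp (- l * \<theta> i))) \<longlonglongrightarrow> Q"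
  shows "prob {\<omega>\<in>space M. AS \<theta> (\<lambda>n. X n \<omega>) W < ennreal s} \<le> exp (l * s - Q)"
proof -
  let ?P = "\<lambda>n \<omega>. \<Sum>i\<in>{1..n}. \<theta> i * indicator W (X i \<omega>)"
  have Pm[measurable]: "\<And>n. ?P n \<in> borel_measurable M" by (rule sumX_meas) auto
  have "prob {\<omega>\<in>space M. AS \<theta> (\<lambda>n. X n \<omega>) W < ennreal s}
     \<le> exp (l * s - (\<Sum>i\<in>{1..n}. prob {\<omega>\<in>space M. X i \<omega> \<in> W} * (1 - exp (- l * \<theta> i))))" for n
  proof -
    have "prob {\<omega>\<in>space M. AS \<theta> (\<lambda>n. X n \<omega>) W < ennreal s} \<le> prob {\<omega>\<in>space M. ?P n \<omega> < s}"
    proof (rule finite_measure_mono)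
      show "{\<omega>\<in>space M. ?P n \<omega> < s} \<in> events" by measurable
      show "{\<omega>\<in>space M. AS \<theta> (\<lambda>n. X n \<omega>) W < ennreal s} \<subseteq> {\<omega>\<in>space M. ?P n \<omega> < s}"
      proof safe
        fix \<omega> assume \<omega>: "\<omega> \<in> space M" and lt: "AS \<theta> (\<lambda>n. X n \<omega>) W < ennreal s"
        have "ennreal (?P n \<omega>) \<le> (SUP m. ennreal (?P m \<omega>))" by (rule SUP_upper) simp
        also have "\<dots> = AS \<theta> (\<lambda>n. X n \<omega>) W" by (rule AS_SUP[symmetric]) (rule th_nonneg)
        finally have "ennreal (?P n \<omega>) \<le> AS \<theta> (\<lambda>n. X n \<omega>) W" .
        from this lt have "ennreal (?P n \<omega>) < ennreal s" by (rule le_less_trans)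
        moreover have "0 \<le> ?P n \<omega>" by (intro sum_nonneg) (simp add: th_nonneg)
        ultimately show "?P n \<omega> < s" by (metis ennreal_less_iff)
      qed
    qed
    also have "\<dots> \<le> exp (l * s - (\<Sum>i\<in>{1..n}. prob {\<omega>\<in>space M. X i \<omega> \<in> W} * (1 - exp (- l * \<theta> i))))"
      by (rule chernoff_lower[OF _ _ W l]) auto
    finally show ?thesis .
  qed
  moreover have "(\<lambda>n. exp (l * s - (\<Sum>i\<in>{1..n}. prob {\<omega>\<in>space M. X i \<omega> \<in> W} * (1 - exp (- l * \<theta> i)))))
      \<longlonglongrightarrow> exp (l * s - Q)"
    by (intro tendsto_intros Q)
  ultimately show ?thesis
    by (intro LIMSEQ_le_const) auto
qed

end

lemma one_minus_exp_half: assumes "0 \<le> (z::real)" "z \<le> 1" shows "z / 2 \<le> 1 - exp (- z)"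
proof -
  have "1 + z \<le> exp z" by (rule exp_ge_add_one_self)
  then have "exp (- z) \<le> 1 / (1 + z)"
    using assms by (simp add: exp_minus divide_simps)
  also have "1 / (1 + z) \<le> 1 - z / 2"
  proof -
    have zz: "z * z \<le> z" using assms by (simp add: mult_left_le_one_le)
    have "1 \<le> (1 - z / 2) * (1 + z)" using zz by (simp add: algebra_simps)
    then show ?thesis using assms by (simp add: divide_simps)
  qed
  finally show ?thesis by simp
qed

lemma one_minus_exp_le: "1 - exp (- (z::real)) \<le> z"
  using exp_ge_add_one_self[of "- z"] by simp

definition mfun :: "(nat \<Rightarrow> real) \<Rightarrow> real \<Rightarrow> real" where
  "mfun th x = (\<Sum>i. th (Suc i) * (1 - exp (- x * th (Suc i))))"

context cutsetup begin

lemma XS_meas[measurable]: "X (Suc i) \<in> borel_measurable M"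
  using Xm by simp

lemma m_term_nonneg: "0 \<le> x \<Longrightarrow> 0 \<le> \<theta> i * (1 - exp (- x * \<theta> i))"
  using th_nonneg[of i] by (intro mult_nonneg_nonneg) (auto simp: mult_nonneg_nonneg)

lemma m_term_le: "0 \<le> x \<Longrightarrow> \<theta> i * (1 - exp (- x * \<theta> i)) \<le> x * (\<theta> i)\<^sup>2"
proof -
  assume x: "0 \<le> x"
  have "\<theta> i * (1 - exp (- (x * \<theta> i))) \<le> \<theta> i * (x * \<theta> i)"
    using th_nonneg[of i] one_minus_exp_le[of "x * \<theta> i"] by (intro mult_left_mono) auto
  then show ?thesis by (simp add: power2_eq_square mult_ac)
qed

lemma thS_summable: "summable (\<lambda>i. (\<theta> (Suc i))\<^sup>2)"
  using summable_ignore_initial_segment[OF th_summable, of 1] by simp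

lemma thS_suminf: "(\<Sum>i. (\<theta> (Suc i))\<^sup>2) \<le> 1"
proof -
  have "(\<Sum>i. (\<theta> (Suc i))\<^sup>2) = (\<Sum>i. (\<theta> i)\<^sup>2) - (\<theta> 0)\<^sup>2"
    using suminf_split_head[OF th_summable] by simp
  also have "\<dots> = 1 - (\<theta> 0)\<^sup>2" using th_sums sums_unique by metis
  finally show ?thesis by simp
qed

lemma m_summable: "0 \<le> x \<Longrightarrow> summable (\<lambda>i. \<theta> (Suc i) * (1 - exp (- x * \<theta> (Suc i))))"
  by (rule summable_comparison_test'[where g="\<lambda>i. x * (\<theta> (Suc i))\<^sup>2"])
     (use m_term_le m_term_nonneg thS_summable in \<open>auto intro: summable_mult\<close>)

lemma m_nonneg: "0 \<le> x \<Longrightarrow> 0 \<le> mfun \<theta> x"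
  unfolding mfun_def by (intro suminf_nonneg m_summable m_term_nonneg)

lemma m_le: "0 \<le> x \<Longrightarrow> mfun \<theta> x \<le> x"
proof -
  assume x: "0 \<le> x"
  have "mfun \<theta> x \<le> (\<Sum>i. x * (\<theta> (Suc i))\<^sup>2)"
    unfolding mfun_def using x
    by (intro suminf_le m_term_le m_summable summable_mult thS_summable)
  also have "\<dots> = x * (\<Sum>i. (\<theta> (Suc i))\<^sup>2)"
    by (rule suminf_mult[OF thS_summable])
  also have "\<dots> \<le> x" using x thS_suminf by (simp add: mult_left_le)
  finally show ?thesis .
qed

lemma m_partial: "0 \<le> x \<Longrightarrow> (\<Sum>i\<in>{1..n}. \<theta> i * (1 - exp (- x * \<theta> i))) \<le> mfun \<theta> x"
proof -
  assume x: "0 \<le> x"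
  have "(\<Sum>i\<in>{1..n}. \<theta> i * (1 - exp (- x * \<theta> i))) = (\<Sum>i<n. \<theta> (Suc i) * (1 - exp (- x * \<theta> (Suc i))))"
    by (simp add: sum.atLeast1_atMost_eq)
  also have "\<dots> \<le> mfun \<theta> x"
    unfolding mfun_def using x by (intro sum_le_suminf m_summable m_term_nonneg) auto
  finally show ?thesis .
qed

lemma m_pos: assumes "0 < \<theta> 1" "0 < x" shows "0 < mfun \<theta> x"
proof -
  have s: "summable (\<lambda>i. \<theta> (Suc i) * (1 - exp (- x * \<theta> (Suc i))))" using assms by (intro m_summable) auto
  have n: "\<And>n. 0 \<le> \<theta> (Suc n) * (1 - exp (- x * \<theta> (Suc n)))" using assms by (intro m_term_nonneg) simp
  have p: "0 < \<theta> (Suc 0) * (1 - exp (- x * \<theta> (Suc 0)))" using assms by (simp add: mult_pos_pos)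
  show ?thesis unfolding mfun_def by (rule suminf_pos2[OF s n p])
qed

lemma window_term:
  assumes i: "1 \<le> i" and x: "0 < x" "x \<le> u" and l: "0 \<le> ell"
  shows "prob {\<omega>\<in>space M. X i \<omega> \<in> {u<..u+ell}} * (exp (x / 2 * \<theta> i) - 1) \<le> ell * (\<theta> i * (1 - exp (- x * \<theta> i)))"
proof (cases "\<theta> i = 0")
  case True then show ?thesis by simp
next
  case False
  then have th: "0 < \<theta> i" using th_nonneg[of i] by simp
  let ?t = "\<theta> i"
  have p: "prob {\<omega>\<in>space M. X i \<omega> \<in> {u<..u+ell}} = exp (- u * ?t) - exp (- (u+ell) * ?t)"
    using X_window[OF i th, of u "u+ell"] x l by simp
  have "exp (- u * ?t) - exp (- (u+ell) * ?t) = exp (- u * ?t) * (1 - exp (- (ell * ?t)))"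
    by (simp add: algebra_simps flip: exp_add)
  also have "\<dots> \<le> exp (- u * ?t) * (ell * ?t)"
    using one_minus_exp_le[of "ell * ?t"] by (intro mult_left_mono) auto
  also have "\<dots> \<le> exp (- x * ?t) * (ell * ?t)"
    using x th l by (intro mult_right_mono) (auto simp: mult_nonneg_nonneg)
  finally have pb: "prob {\<omega>\<in>space M. X i \<omega> \<in> {u<..u+ell}} \<le> exp (- x * ?t) * (ell * ?t)" using p by simp
  have e0: "0 \<le> exp (x / 2 * ?t) - 1" using x th by simp
  have "prob {\<omega>\<in>space M. X i \<omega> \<in> {u<..u+ell}} * (exp (x / 2 * ?t) - 1) \<le> exp (- x * ?t) * (ell * ?t) * (exp (x / 2 * ?t) - 1)"
    using pb e0 by (rule mult_right_mono)
  also have "\<dots> = ell * ?t * (exp (- x * ?t) * exp (x / 2 * ?t) - exp (- x * ?t))"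
    by (simp add: algebra_simps)
  also have "exp (- x * ?t) * exp (x / 2 * ?t) = exp (- (x / 2 * ?t))"
    by (simp flip: exp_add)
  also have "ell * ?t * (exp (- (x / 2 * ?t)) - exp (- x * ?t)) \<le> ell * ?t * (1 - exp (- x * ?t))"
    using l th x by (intro mult_left_mono) (auto simp: mult_nonneg_nonneg)
  finally show ?thesis by (simp add: mult_ac)
qed

lemma window_prob:
  assumes x: "0 < x" "x \<le> u" and l: "0 \<le> ell" and t: "0 \<le> t"
  shows "prob {\<omega>\<in>space M. ennreal t < AS \<theta> (\<lambda>n. X n \<omega>) {u<..u+ell}} \<le> exp (- (x / 2) * t + ell * mfun \<theta> x)"
proof (rule tail_upper)
  show "0 \<le> x / 2" using x by simp
  fix n
  have "(\<Sum>i\<in>{1..n}. prob {\<omega>\<in>space M. X i \<omega> \<in> {u<..u+ell}} * (exp (x / 2 * \<theta> i) - 1))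
      \<le> (\<Sum>i\<in>{1..n}. ell * (\<theta> i * (1 - exp (- x * \<theta> i))))"
    by (intro sum_mono window_term x l) auto
  also have "\<dots> = ell * (\<Sum>i\<in>{1..n}. \<theta> i * (1 - exp (- x * \<theta> i)))"
    by (simp add: sum_distrib_left)
  also have "\<dots> \<le> ell * mfun \<theta> x"
    using l x by (intro mult_left_mono m_partial) auto
  finally show "(\<Sum>i\<in>{1..n}. prob {\<omega>\<in>space M. X i \<omega> \<in> {u<..u+ell}} * (exp (x / 2 * \<theta> i) - 1)) \<le> ell * mfun \<theta> x" .
qed (use t in auto)

lemma lower_prob:
  assumes th1: "0 < \<theta> 1" and x: "0 \<le> x"
  shows "prob {\<omega>\<in>space M. AS \<theta> (\<lambda>n. X n \<omega>) {0..x} < ennreal s} \<le> exp (s / \<theta> 1 - mfun \<theta> x / (2 * \<theta> 1))"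
proof -
  define f where "f i = prob {\<omega>\<in>space M. X i \<omega> \<in> {0..x}} * (1 - exp (- (1 / \<theta> 1) * \<theta> i))" for i
  have fbounds: "\<theta> i * (1 - exp (- x * \<theta> i)) / (2 * \<theta> 1) \<le> f i \<and> f i \<le> x * (\<theta> i)\<^sup>2 / \<theta> 1" if i: "1 \<le> i" for i
  proof (cases "\<theta> i = 0")
    case True then show ?thesis by (simp add: f_def)
  next
    case False
    then have th: "0 < \<theta> i" using th_nonneg[of i] by simp
    have q: "prob {\<omega>\<in>space M. X i \<omega> \<in> {0..x}} = 1 - exp (- x * \<theta> i)" by (rule X_Icc[OF i th x])
    have z: "0 \<le> \<theta> i / \<theta> 1" "\<theta> i / \<theta> 1 \<le> 1" using th th1 th_mono[OF order.refl i] by auto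
    have e: "- (1 / \<theta> 1) * \<theta> i = - (\<theta> i / \<theta> 1)" by simp
    have q0: "0 \<le> 1 - exp (- x * \<theta> i)" using x th by (simp add: mult_nonneg_nonneg)
    have lo: "(1 - exp (- x * \<theta> i)) * ((\<theta> i / \<theta> 1) / 2) \<le> f i"
      unfolding f_def q e by (intro mult_left_mono one_minus_exp_half z q0)
    have hi: "f i \<le> (x * \<theta> i) * (\<theta> i / \<theta> 1)"
      unfolding f_def q e
      using one_minus_exp_le[of "x * \<theta> i"] one_minus_exp_le[of "\<theta> i / \<theta> 1"] z q0
      by (intro mult_mono) auto
    show ?thesis using lo hi th1 by (simp add: field_simps power2_eq_square)
  qed
  have f0: "0 \<le> f i" if "1 \<le> i" for i
    using fbounds[OF that] m_term_nonneg[OF x, of i] th1 by (smt (verit) divide_nonneg_pos)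
  have sf: "summable (\<lambda>i. f (Suc i))"
    by (rule summable_comparison_test'[where g="\<lambda>i. x * (\<theta> (Suc i))\<^sup>2 / \<theta> 1"])
       (use fbounds f0 thS_summable in \<open>auto intro: summable_mult summable_divide\<close>)
  have Q: "(\<lambda>n. \<Sum>i\<in>{1..n}. prob {\<omega>\<in>space M. X i \<omega> \<in> {0..x}} * (1 - exp (- (1 / \<theta> 1) * \<theta> i))) \<longlonglongrightarrow> (\<Sum>i. f (Suc i))"
    using summable_LIMSEQ[OF sf] by (simp add: f_def sum.atLeast1_atMost_eq)
  have "prob {\<omega>\<in>space M. AS \<theta> (\<lambda>n. X n \<omega>) {0..x} < ennreal s} \<le> exp ((1 / \<theta> 1) * s - (\<Sum>i. f (Suc i)))"
    by (rule tail_lower[OF _ _ Q]) (use th1 in auto)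
  also have "\<dots> \<le> exp (s / \<theta> 1 - mfun \<theta> x / (2 * \<theta> 1))"
  proof -
    have "mfun \<theta> x / (2 * \<theta> 1) = (\<Sum>i. \<theta> (Suc i) * (1 - exp (- x * \<theta> (Suc i))) / (2 * \<theta> 1))"
      unfolding mfun_def by (rule suminf_divide[symmetric]) (rule m_summable[OF x])
    also have "\<dots> \<le> (\<Sum>i. f (Suc i))"
      by (intro suminf_le sf summable_divide m_summable x) (use fbounds in auto)
    finally show ?thesis by simp
  qed
  finally show ?thesis .
qed

lemma AS_expect: assumes x: "0 \<le> x"
  shows "(\<integral>\<^sup>+\<omega>. AS \<theta> (\<lambda>n. X n \<omega>) {0..x} \<partial>M) \<le> ennreal x"
proof -
  have "(\<integral>\<^sup>+\<omega>. AS \<theta> (\<lambda>n. X n \<omega>) {0..x} \<partial>M) = (\<Sum>i. \<integral>\<^sup>+\<omega>. ennreal (\<theta> (Suc i) * indicator {0..x} (X (Suc i) \<omega>)) \<partial>M)"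
    unfolding AS_def by (rule nn_integral_suminf) measurable
  also have "\<dots> \<le> (\<Sum>i. ennreal (x * (\<theta> (Suc i))\<^sup>2))"
  proof (rule suminf_le)
    fix i
    let ?A = "{\<omega>\<in>space M. X (Suc i) \<omega> \<in> {0..x}}"
    have "(\<integral>\<^sup>+\<omega>. ennreal (\<theta> (Suc i) * indicator {0..x} (X (Suc i) \<omega>)) \<partial>M) = (\<integral>\<^sup>+\<omega>. ennreal (\<theta> (Suc i)) * indicator ?A \<omega> \<partial>M)"
      by (intro nn_integral_cong) (auto split: split_indicator)
    also have "\<dots> = ennreal (\<theta> (Suc i)) * emeasure M ?A"
      by (rule nn_integral_cmult_indicator) measurable
    also have "\<dots> = ennreal (\<theta> (Suc i) * prob ?A)"
      using th_nonneg by (simp add: emeasure_eq_measure ennreal_mult)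
    also have "\<dots> \<le> ennreal (x * (\<theta> (Suc i))\<^sup>2)"
    proof (cases "\<theta> (Suc i) = 0")
      case True then show ?thesis by simp
    next
      case False
      then have th: "0 < \<theta> (Suc i)" using th_nonneg[of "Suc i"] by simp
      have "prob ?A = 1 - exp (- x * \<theta> (Suc i))" by (rule X_Icc[OF _ th x]) simp
      then have "\<theta> (Suc i) * prob ?A \<le> x * (\<theta> (Suc i))\<^sup>2" using m_term_le[OF x, of "Suc i"] by simp
      then show ?thesis by (rule ennreal_leI)
    qed
    finally show "(\<integral>\<^sup>+\<omega>. ennreal (\<theta> (Suc i) * indicator {0..x} (X (Suc i) \<omega>)) \<partial>M) \<le> ennreal (x * (\<theta> (Suc i))\<^sup>2)" .
  qed (simp_all add: summableI)
  also have "\<dots> = ennreal (\<Sum>i. x * (\<theta> (Suc i))\<^sup>2)"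
    by (rule suminf_ennreal2) (use x thS_summable in \<open>auto intro: summable_mult\<close>)
  also have "\<dots> \<le> ennreal x"
    using x thS_suminf by (intro ennreal_leI) (simp add: suminf_mult[OF thS_summable] mult_left_le)
  finally show ?thesis .
qed

lemma growth_prob: assumes x: "1 \<le> x"
  shows "emeasure M {\<omega>\<in>space M. ennreal (x ^ 3) \<le> AS \<theta> (\<lambda>n. X n \<omega>) {0..x}} \<le> ennreal (1 / x\<^sup>2)"
proof -
  have "ennreal (x ^ 3) * emeasure M {\<omega>\<in>space M. ennreal (x ^ 3) \<le> AS \<theta> (\<lambda>n. X n \<omega>) {0..x}} \<le> (\<integral>\<^sup>+\<omega>. AS \<theta> (\<lambda>n. X n \<omega>) {0..x} \<partial>M)"
    by (rule markov_enn) measurable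
  also have "\<dots> \<le> ennreal x" using x by (intro AS_expect) simp
  finally have I: "ennreal (x ^ 3) * emeasure M {\<omega>\<in>space M. ennreal (x ^ 3) \<le> AS \<theta> (\<lambda>n. X n \<omega>) {0..x}} \<le> ennreal x" .
  let ?p = "prob {\<omega>\<in>space M. ennreal (x ^ 3) \<le> AS \<theta> (\<lambda>n. X n \<omega>) {0..x}}"
  have "x ^ 3 * ?p \<le> x"
    using I x by (simp add: emeasure_eq_measure ennreal_mult[symmetric] ennreal_le_iff del: ennreal_mult')
  then have "?p \<le> 1 / x\<^sup>2" using x by (simp add: field_simps power2_eq_square power3_eq_cube)
  then show ?thesis by (simp add: emeasure_eq_measure ennreal_leI)
qed

end

context cutsetup begin

lemma E_tail_ln: assumes "1 \<le> i" shows "prob {\<omega>\<in>space M. 2 * ln (real i) < E j \<omega>} = 1 / (real i)\<^sup>2"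
proof -
  have pos: "0 < real i" using assms by simp
  have l: "2 * ln (real i) = ln ((real i)\<^sup>2)" using pos by (simp add: ln_realpow)
  have "prob {\<omega>\<in>space M. 2 * ln (real i) < E j \<omega>} = exp (- (2 * ln (real i)))"
    using assms by (intro E_gt) simp
  also have "\<dots> = inverse (exp (ln ((real i)\<^sup>2)))" unfolding l by (rule exp_minus)
  also have "\<dots> = 1 / (real i)\<^sup>2" using pos by (simp add: divide_inverse)
  finally show ?thesis .
qed

lemma E_exp_int: "(\<integral>\<^sup>+\<omega>. ennreal (exp (- E j \<omega>)) \<partial>M) \<le> ennreal (7 / 9)"
proof -
  have "(\<integral>\<^sup>+\<omega>. ennreal (exp (- E j \<omega>)) \<partial>M) \<le> (\<integral>\<^sup>+\<omega>. ennreal (exp ((-1) * indicator {1<..} (E j \<omega>))) \<partial>M)"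
  proof (rule nn_integral_mono_AE)
    show "AE \<omega> in M. ennreal (exp (- E j \<omega>)) \<le> ennreal (exp ((-1) * indicator {1<..} (E j \<omega>)))"
      using E_nonneg_AE[of j] by eventually_elim (auto intro!: ennreal_leI split: split_indicator)
  qed
  also have "\<dots> = ennreal (1 + (exp (-1) - 1) * prob {\<omega>\<in>space M. E j \<omega> \<in> {1<..}})"
    by (rule exp_ind_integral) measurable
  also have "prob {\<omega>\<in>space M. E j \<omega> \<in> {1<..}} = exp (-1)"
    using E_gt[of 1 j] by simp
  also have "1 + (exp (-1) - 1) * exp (-1) \<le> (7 / 9 :: real)"
  proof -
    have e3: "exp 1 \<le> (3::real)" by (rule exp_le)
    have e2: "2 \<le> exp (1::real)" using exp_ge_add_one_self[of 1] by simp
    have y1: "1 / 3 \<le> exp (-1::real)" using e3 by (simp add: exp_minus divide_simps)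
    have y2: "exp (-1::real) \<le> 1 / 2" using e2 by (simp add: exp_minus divide_simps)
    define y where "y = exp (-1::real)"
    have "1 + (y - 1) * y \<le> 7 / 9"
    proof -
      have "(y - 1/3) * (y - 1/2) \<le> 0" using y1 y2 unfolding y_def by (intro mult_nonneg_nonpos) auto
      then show ?thesis using y1 y2 unfolding y_def[symmetric] by (simp add: algebra_simps) 
    qed
    then show ?thesis by (simp add: y_def)
  qed
  finally show ?thesis by (simp add: ennreal_leI)
qed

lemma S_lower: "prob {\<omega>\<in>space M. (\<Sum>j<i. E j \<omega>) < real i / 20} \<le> (140 / 171) ^ i"
proof -
  let ?S = "\<lambda>\<omega>. \<Sum>j<i. E j \<omega>"
  have "(\<integral>\<^sup>+\<omega>. ennreal (exp (- ?S \<omega>)) \<partial>M) = (\<integral>\<^sup>+\<omega>. (\<Prod>j<i. ennreal (exp (- E j \<omega>))) \<partial>M)"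
    by (intro nn_integral_cong) (simp add: exp_sum prod_ennreal sum_negf[symmetric])
  also have "\<dots> = (\<Prod>j<i. \<integral>\<^sup>+\<omega>. ennreal (exp (- E j \<omega>)) \<partial>M)"
    by (rule prod_E) measurable
  also have "\<dots> \<le> (\<Prod>j<i. ennreal (7/9))"
    by (intro prod_mono_ennreal E_exp_int)
  also have "\<dots> = ennreal ((7/9) ^ i)" by (simp add: prod_ennreal ennreal_power)
  finally have I: "(\<integral>\<^sup>+\<omega>. ennreal (exp (- ?S \<omega>)) \<partial>M) \<le> ennreal ((7/9) ^ i)" .
  have "ennreal (exp (- (real i / 20))) * emeasure M {\<omega>\<in>space M. ennreal (exp (- (real i / 20))) \<le> ennreal (exp (- ?S \<omega>))}
      \<le> (\<integral>\<^sup>+\<omega>. ennreal (exp (- ?S \<omega>)) \<partial>M)"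
    by (rule markov_enn) measurable
  also note I
  finally have II: "exp (- (real i / 20)) * prob {\<omega>\<in>space M. exp (- (real i / 20)) \<le> exp (- ?S \<omega>)} \<le> (7/9) ^ i"
    by (simp add: emeasure_eq_measure ennreal_mult[symmetric] ennreal_le_iff del: ennreal_mult')
  let ?P = "prob {\<omega>\<in>space M. exp (- (real i / 20)) \<le> exp (- ?S \<omega>)}"
  have A0: "prob {\<omega>\<in>space M. ?S \<omega> < real i / 20} \<le> ?P"
    by (intro finite_measure_mono) auto
  have inv: "exp (real i / 20) * exp (- (real i / 20)) = 1" by (simp flip: exp_add)
  have "?P = exp (real i / 20) * (exp (- (real i / 20)) * ?P)"
    by (simp add: mult.assoc[symmetric] inv)
  also have "\<dots> \<le> exp (real i / 20) * (7/9) ^ i"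
    using II by (intro mult_left_mono) auto
  finally have A: "?P \<le> exp (real i / 20) * (7/9) ^ i" .
  have B: "exp (real i / 20) = exp (1/20) ^ i"
    by (simp add: exp_of_nat_mult[symmetric])
  have C: "exp (1/20::real) \<le> 20 / 19"
  proof -
    have "1 - 1/20 \<le> exp (- (1/20::real))" using exp_ge_add_one_self[of "- (1/20::real)"] by simp
    then show ?thesis by (simp add: exp_minus divide_simps)
  qed
  have D: "exp (1/20::real) ^ i * (7/9) ^ i \<le> (20/19) ^ i * (7/9) ^ i"
    using C by (intro mult_right_mono power_mono) auto
  have E: "(20/19) ^ i * (7/9) ^ i = ((140/171) ^ i :: real)" by (simp add: power_mult_distrib[symmetric])
  show ?thesis using A0 A D unfolding B E by linarith
qed

end

lemma ind_Icc_meas[measurable]: "(\<lambda>l::real. indicator {0..l} c :: real) \<in> borel_measurable borel"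
proof -
  have "(\<lambda>l::real. indicator {0..l} c :: real) = (\<lambda>l. if 0 \<le> c \<and> c \<le> l then 1 else 0)"
    by (auto simp: fun_eq_iff split: split_indicator)
  also have "\<dots> \<in> borel_measurable borel" by measurable
  finally show ?thesis .
qed

lemma mu_meas[measurable]: "mu_Icc0 th x \<in> borel_measurable borel"
  unfolding mu_Icc0_def[abs_def] by measurable

locale detsetup =
  fixes \<theta> :: "nat \<Rightarrow> real" and x e :: "nat \<Rightarrow> real"
  assumes Om: "Omega_param \<theta>"
    and e0: "\<And>j. 0 \<le> e j"
    and x1: "0 < \<theta> 1 \<Longrightarrow> 0 \<le> x 1"
begin

abbreviation "mu \<equiv> mu_Icc0 \<theta> x"
abbreviation "Lam \<equiv> cum_intensity \<theta> x"

lemma th_nonneg: "0 \<le> \<theta> i"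
  using Om by (simp add: Omega_param_def)

lemma mu_mono: "l \<le> l' \<Longrightarrow> mu l \<le> mu l'"
  unfolding mu_Icc0_AS
  by (intro add_mono ennreal_leI mult_left_mono AS_mono th_nonneg) auto

lemma AS_le_mu: "AS \<theta> x {0..l} \<le> mu l"
  unfolding mu_Icc0_AS by simp

lemma diff_le_mu: "ennreal ((\<theta> 0)\<^sup>2 * l) \<le> mu l"
  unfolding mu_Icc0_AS by simp

lemma Lam_mono: "l \<le> l' \<Longrightarrow> Lam l \<le> Lam l'"
  unfolding cum_intensity_def
  by (intro nn_integral_mono mult_left_mono) (auto split: split_indicator)

lemma Lam_step: assumes "0 \<le> t" "t \<le> s"
  shows "Lam t + ennreal (s - t) * mu t \<le> Lam s"
proof -
  have eq: "Lam s = Lam t + (\<integral>\<^sup>+u. mu u * indicator {t<..s} u \<partial>lborel)"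
  proof -
    have "Lam s = (\<integral>\<^sup>+u. mu u * indicator {0..t} u + mu u * indicator {t<..s} u \<partial>lborel)"
      unfolding cum_intensity_def using assms
      by (intro nn_integral_cong) (auto split: split_indicator)
    also have "\<dots> = Lam t + (\<integral>\<^sup>+u. mu u * indicator {t<..s} u \<partial>lborel)"
      unfolding cum_intensity_def by (rule nn_integral_add) measurable
    finally show ?thesis .
  qed
  have ge: "(\<integral>\<^sup>+u. mu t * indicator {t<..s} u \<partial>lborel) \<le> (\<integral>\<^sup>+u. mu u * indicator {t<..s} u \<partial>lborel)"
    by (intro nn_integral_mono) (auto split: split_indicator intro: mu_mono)
  have v: "(\<integral>\<^sup>+u. mu t * indicator {t<..s} u \<partial>lborel) = ennreal (s - t) * mu t"
    using assms by (simp add: nn_integral_cmult_indicator mult.commute)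
  show ?thesis using eq ge v add_left_mono by metis
qed

lemma Lam_le: assumes "0 \<le> l" shows "Lam l \<le> ennreal l * mu l"
proof -
  have "Lam l \<le> (\<integral>\<^sup>+u. mu l * indicator {0..l} u \<partial>lborel)"
    unfolding cum_intensity_def
    by (intro nn_integral_mono) (auto split: split_indicator intro: mu_mono)
  also have "\<dots> = ennreal l * mu l"
    using assms by (simp add: nn_integral_cmult_indicator mult.commute)
  finally show ?thesis .
qed

lemma Lam_unbounded: "\<exists>l\<ge>0. ennreal c \<le> Lam l"
proof (cases "0 < \<theta> 1")
  case True
  have xx: "0 \<le> x 1" using x1 True by simp
  have mux: "ennreal (\<theta> 1) \<le> mu (x 1)"
  proof -
    have "ennreal (\<theta> 1) = (\<Sum>i\<in>{0}. ennreal (\<theta> (Suc i) * indicator {0..x 1} (x (Suc i))))"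
      using xx by simp
    also have "\<dots> \<le> AS \<theta> x {0..x 1}"
      unfolding AS_def by (rule sum_le_suminf) (auto simp: summableI)
    also have "\<dots> \<le> mu (x 1)" by (rule AS_le_mu)
    finally show ?thesis .
  qed
  define r where "r = max c 0 / \<theta> 1"
  have r: "0 \<le> r" using True by (simp add: r_def)
  have "Lam (x 1) + ennreal (x 1 + r - x 1) * mu (x 1) \<le> Lam (x 1 + r)"
    using xx r by (intro Lam_step) auto
  then have H: "Lam (x 1) + ennreal r * mu (x 1) \<le> Lam (x 1 + r)" by simp
  have "ennreal r * ennreal (\<theta> 1) \<le> ennreal r * mu (x 1)" using mux by (rule mult_left_mono) simp
  also have "\<dots> \<le> Lam (x 1) + ennreal r * mu (x 1)" by (simp add: add_increasing)
  finally have "ennreal r * ennreal (\<theta> 1) \<le> Lam (x 1 + r)" using H by (rule order_trans)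
  moreover have "ennreal c \<le> ennreal r * ennreal (\<theta> 1)"
    using True by (simp add: r_def ennreal_mult[symmetric] ennreal_leI)
  ultimately show ?thesis using xx r by (intro exI[of _ "x 1 + r"]) auto
next
  case False
  then have t1: "\<theta> 1 = 0" using th_nonneg[of 1] by simp
  have "\<theta> 0 \<noteq> 0"
  proof
    assume "\<theta> 0 = 0"
    have "\<theta> i = 0" if "1 \<le> i" for i
    proof -
      have st: "\<And>n. 1 \<le> n \<Longrightarrow> \<theta> (Suc n) \<le> \<theta> n" using Om by (simp add: Omega_param_def)
      have "\<theta> i \<le> \<theta> 1" using that
      proof (induction i rule: dec_induct)
        case base then show ?case by simp
      next
        case (step n) then show ?case using st[of n] by linarith
      qed
      then show ?thesis using t1 th_nonneg[of i] by simp
    qed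
    then have "summable (\<lambda>i. \<theta> (Suc i))" by simp
    then show False using Om \<open>\<theta> 0 = 0\<close> by (simp add: Omega_param_def)
  qed
  then have t0: "0 < (\<theta> 0)\<^sup>2" by simp
  define r where "r = max 1 (c / (\<theta> 0)\<^sup>2)"
  have r: "1 \<le> r" by (simp add: r_def)
  have "Lam r + ennreal (2 * r - r) * mu r \<le> Lam (2 * r)"
    using r by (intro Lam_step) auto
  then have H: "Lam r + ennreal r * mu r \<le> Lam (2 * r)" by simp
  have "ennreal r * mu r \<le> Lam r + ennreal r * mu r" by (simp add: add_increasing)
  then have "ennreal r * mu r \<le> Lam (2 * r)" using H by (rule order_trans)
  moreover have "ennreal r * ennreal ((\<theta> 0)\<^sup>2 * r) \<le> ennreal r * mu r"
    by (intro mult_left_mono diff_le_mu) auto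
  moreover have "ennreal c \<le> ennreal r * ennreal ((\<theta> 0)\<^sup>2 * r)"
  proof -
    have "(\<theta> 0)\<^sup>2 * (c / (\<theta> 0)\<^sup>2) \<le> (\<theta> 0)\<^sup>2 * r"
      unfolding r_def by (intro mult_left_mono) auto
    then have "c \<le> (\<theta> 0)\<^sup>2 * r" using t0 by simp
    also have "\<dots> \<le> r * ((\<theta> 0)\<^sup>2 * r)" using r t0 by simp
    finally show ?thesis using r t0 by (simp add: ennreal_mult[symmetric] ennreal_leI)
  qed
  ultimately show ?thesis using r by (intro exI[of _ "2 * r"]) auto
qed

end

context detsetup begin

abbreviation "Y \<equiv> cuts \<theta> x e"
definition "Ssum k = (\<Sum>j<k. e j)"
definition "TT k = {l. 0 \<le> l \<and> ennreal (Ssum k) \<le> Lam l}"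

lemma Ssum_nonneg: "0 \<le> Ssum k" unfolding Ssum_def by (intro sum_nonneg e0)

lemma Ssum_Suc: "Ssum (Suc k) = Ssum k + e k" unfolding Ssum_def by simp

lemma TT_ne: "TT k \<noteq> {}"
  using Lam_unbounded[of "Ssum k"] unfolding TT_def by auto

lemma TT_bdd: "bdd_below (TT k)"
  unfolding TT_def by (intro bdd_belowI[of _ 0]) auto

lemma Y_alt: "1 \<le> k \<Longrightarrow> Y k = Inf (TT k)"
  unfolding cuts_def TT_def Ssum_def by simp

lemma Y0: "Y 0 = 0" unfolding cuts_def by simp

lemma Y_nonneg: "0 \<le> Y k"
proof (cases "k = 0")
  case True then show ?thesis by (simp add: Y0)
next
  case False
  then show ?thesis using TT_ne[of k] by (simp add: Y_alt) (rule cInf_greatest, auto simp: TT_def)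
qed

lemma Y_above: "Y k < t \<Longrightarrow> ennreal (Ssum k) \<le> Lam t"
proof (cases "k = 0")
  case True then show ?thesis by (simp add: Ssum_def)
next
  case False
  assume "Y k < t"
  then have "Inf (TT k) < t" using False by (simp add: Y_alt)
  then obtain l where l: "l \<in> TT k" "l < t" using cInf_lessD[OF TT_ne] by blast
  then have "ennreal (Ssum k) \<le> Lam l" by (simp add: TT_def)
  also have "\<dots> \<le> Lam t" using l by (intro Lam_mono) simp
  finally show ?thesis .
qed

lemma Y_below: assumes "0 \<le> s" "s < Y k" shows "Lam s < ennreal (Ssum k)"
proof (cases "k = 0")
  case True then show ?thesis using assms by (simp add: Y0)
next
  case False
  show ?thesis
  proof (rule ccontr)
    assume "\<not> Lam s < ennreal (Ssum k)"
    then have "s \<in> TT k" using assms by (simp add: TT_def not_less)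
    then have "Inf (TT k) \<le> s" by (rule cInf_lower[OF _ TT_bdd])
    then show False using assms False by (simp add: Y_alt)
  qed
qed

lemma Y_mono: "Y k \<le> Y (Suc k)"
proof (cases "k = 0")
  case True then show ?thesis by (simp add: Y0 Y_nonneg)
next
  case False
  have "ennreal (Ssum k) \<le> ennreal (Ssum (Suc k))" using e0[of k] by (intro ennreal_leI) (simp add: Ssum_Suc)
  then have "TT (Suc k) \<subseteq> TT k" unfolding TT_def by (auto intro: order_trans)
  then have "Inf (TT k) \<le> Inf (TT (Suc k))" by (rule cInf_superset_mono[OF TT_ne TT_bdd])
  then show ?thesis using False by (simp add: Y_alt)
qed

lemma gap:
  assumes c: "0 \<le> c" "ennreal c \<le> mu (Y i)"
  shows "(Y (Suc i) - Y i) * c \<le> e i"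
proof (cases "Y (Suc i) \<le> Y i")
  case True
  then have "(Y (Suc i) - Y i) * c \<le> 0" using c by (simp add: mult_nonpos_nonneg)
  then show ?thesis using e0[of i] by linarith
next
  case False
  define a where "a = Y i"
  define b where "b = Y (Suc i)"
  have ab: "a < b" using False by (simp add: a_def b_def)
  have a0: "0 \<le> a" by (simp add: a_def Y_nonneg)
  show ?thesis
  proof (rule ccontr)
    assume "\<not> ?thesis"
    then have lt: "e i < (b - a) * c" by (simp add: a_def b_def)
    have cpos: "0 < c"
    proof (rule ccontr)
      assume "\<not> 0 < c"
      then have "c = 0" using c by simp
      then show False using lt e0[of i] by simp
    qed
    define eps where "eps = min ((b - a) / 3) (((b - a) * c - e i) / (3 * c))"
    have eps: "0 < eps" using ab lt cpos by (simp add: eps_def)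
    have eps1: "eps \<le> (b - a) / 3" unfolding eps_def by (rule min.cobounded1)
    have eps2: "eps * c \<le> ((b - a) * c - e i) / 3"
    proof -
      have "eps \<le> ((b - a) * c - e i) / (3 * c)" unfolding eps_def by (rule min.cobounded2)
      then have "eps * c \<le> ((b - a) * c - e i) / (3 * c) * c" using cpos by (intro mult_right_mono) auto
      also have "\<dots> = ((b - a) * c - e i) / 3" using cpos by (simp add: field_simps)
      finally show ?thesis .
    qed
    define t where "t = a + eps"
    define s where "s = b - eps"
    have ts: "a < t" "t \<le> s" "s < b" "0 \<le> t" "0 \<le> s"
      using eps eps1 a0 ab by (auto simp: t_def s_def)
    have A: "ennreal (Ssum i) \<le> Lam t" using ts by (intro Y_above) (simp add: a_def)
    have B: "Lam s < ennreal (Ssum (Suc i))" using ts by (intro Y_below) (auto simp: b_def)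
    have C: "Lam t + ennreal (s - t) * mu t \<le> Lam s" using ts by (intro Lam_step) auto
    have D: "ennreal c \<le> mu t" using c ts by (metis a_def less_imp_le mu_mono order_trans)
    have "ennreal (Ssum i + (s - t) * c) = ennreal (Ssum i) + ennreal (s - t) * ennreal c"
      using ts c Ssum_nonneg[of i] by (simp add: ennreal_plus ennreal_mult)
    also have "\<dots> \<le> Lam t + ennreal (s - t) * mu t"
      using A D by (intro add_mono mult_left_mono) auto
    also have "\<dots> \<le> Lam s" by (rule C)
    also have "\<dots> < ennreal (Ssum i + e i)" using B by (simp add: Ssum_Suc)
    finally have F: "ennreal (Ssum i + (s - t) * c) < ennreal (Ssum i + e i)" .
    have nn: "0 \<le> Ssum i + (s - t) * c" using ts c Ssum_nonneg[of i] by simp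
    have "Ssum i + (s - t) * c < Ssum i + e i" using F ennreal_less_iff[OF nn] by blast
    then have "(s - t) * c < e i" by simp
    moreover have "(s - t) * c = (b - a) * c - 2 * (eps * c)" by (simp add: s_def t_def algebra_simps)
    ultimately have H: "(b - a) * c - 2 * (eps * c) < e i" by simp
    define P where "P = (b - a) * c"
    define q where "q = eps * c"
    have "P - 2 * q < e i" "3 * q \<le> P - e i" "e i < P"
      using H eps2 lt by (simp_all add: P_def q_def)
    then show False by linarith
  qed
qed

end

lemma ln_sq_div_decr:
  fixes y z :: real
  assumes "exp 2 \<le> y" "y \<le> z"
  shows "(ln z)\<^sup>2 / z \<le> (ln y)\<^sup>2 / y"
proof (rule DERIV_nonpos_imp_nonincreasing[OF assms(2)])
  fix t assume t1: "y \<le> t" and t2: "t \<le> z"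
  have t: "y \<le> t \<and> t \<le> z" using t1 t2 by simp
  have tpos: "0 < t" using t assms(1) by (smt (verit) exp_gt_zero)
  have lt: "2 \<le> ln t" using t assms(1) tpos by (metis ln_exp ln_le_cancel_iff exp_gt_zero order_trans)
  have "((\<lambda>t. (ln t)\<^sup>2 / t) has_real_derivative ((2 * ln t * (1 / t)) * t - (ln t)\<^sup>2 * 1) / t\<^sup>2) (at t)"
    using tpos by (auto intro!: derivative_eq_intros simp: power2_eq_square)
  moreover have "((2 * ln t * (1 / t)) * t - (ln t)\<^sup>2 * 1) / t\<^sup>2 \<le> 0"
  proof -
    have eq: "(2 * ln t * (1 / t)) * t - (ln t)\<^sup>2 * 1 = ln t * (2 - ln t)" using tpos by (simp add: power2_eq_square algebra_simps)
    have le: "ln t * (2 - ln t) \<le> 0" using lt by (intro mult_nonneg_nonpos) auto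
    show ?thesis unfolding eq using le tpos by (intro divide_nonpos_pos) auto
  qed
  ultimately show "\<exists>d. ((\<lambda>t. (ln t)\<^sup>2 / t) has_real_derivative d) (at t) \<and> d \<le> 0" by blast
qed

context detsetup begin

lemma th0_sq_le1: "(\<theta> 0)\<^sup>2 \<le> 1"
proof -
  have s: "summable (\<lambda>i. (\<theta> i)\<^sup>2)" using Om by (auto simp: Omega_param_def sums_summable)
  have "(\<Sum>j\<in>{0}. (\<theta> j)\<^sup>2) \<le> (\<Sum>i. (\<theta> i)\<^sup>2)" using s by (intro sum_le_suminf) auto
  also have "\<dots> = 1" using Om by (auto simp: Omega_param_def sums_unique[symmetric])
  finally show ?thesis by simp
qed

lemma e_bound:
  fixes N :: nat
  assumes H1: "\<And>i. N \<le> i \<Longrightarrow> e i \<le> 2 * ln (real i)"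
    and H2: "\<And>i. N \<le> i \<Longrightarrow> real i / 20 \<le> Ssum i"
    and H3: "\<And>n. N \<le> n \<Longrightarrow> AS \<theta> x {0..real n} < ennreal (real n ^ 3)"
    and i: "N \<le> i" "1 \<le> i" and a: "exp 100 \<le> Y i" "real N \<le> Y i"
  shows "e i \<le> 9 * ln (Y i)"
proof -
  define a where "a = Y i"
  have a1: "1 \<le> a" using a(1) unfolding a_def by (smt (verit) one_le_exp_iff)
  have a2: "2 \<le> a" using a(1) exp_ge_add_one_self[of 100] unfolding a_def by linarith
  have la: "100 \<le> ln a" using a(1) a1 unfolding a_def by (metis ln_exp ln_le_cancel_iff exp_gt_zero less_le_trans zero_less_one)
  define n where "n = nat \<lceil>a + 1\<rceil>"
  have n1: "a + 1 \<le> real n" "real n \<le> a + 2" using a1 unfolding n_def by linarith+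
  have nN: "N \<le> n" using a(2) n1 unfolding a_def by linarith
  have M: "mu (a + 1) \<le> ennreal ((a + 1) + (a + 2) ^ 3)"
  proof -
    have "mu (a + 1) = ennreal ((\<theta> 0)\<^sup>2 * (a + 1)) + AS \<theta> x {0..a + 1}" by (rule mu_Icc0_AS)
    also have "ennreal ((\<theta> 0)\<^sup>2 * (a + 1)) \<le> ennreal (a + 1)"
      using th0_sq_le1 a1 by (intro ennreal_leI) (simp add: mult_left_le_one_le)
    also have "AS \<theta> x {0..a + 1} \<le> AS \<theta> x {0..real n}" using n1 by (intro AS_mono th_nonneg) auto
    also have "\<dots> \<le> ennreal (real n ^ 3)" using H3[OF nN] by simp
    also have "\<dots> \<le> ennreal ((a + 2) ^ 3)" using n1 a1 by (intro ennreal_leI power_mono) auto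
    finally show ?thesis using a1 by (simp add: ennreal_plus add_mono)
  qed
  have "ennreal (Ssum i) \<le> Lam (a + 1)" by (rule Y_above) (simp add: a_def)
  also have "\<dots> \<le> ennreal (a + 1) * mu (a + 1)" using a1 by (intro Lam_le) simp
  also have "\<dots> \<le> ennreal (a + 1) * ennreal ((a + 1) + (a + 2) ^ 3)" using M by (rule mult_left_mono) simp
  also have "\<dots> = ennreal ((a + 1) * ((a + 1) + (a + 2) ^ 3))" using a1 by (intro ennreal_mult[symmetric]) auto
  finally have SS: "ennreal (Ssum i) \<le> ennreal ((a + 1) * ((a + 1) + (a + 2) ^ 3))" .
  have nn: "0 \<le> (a + 1) * ((a + 1) + (a + 2) ^ 3)" using a1 by simp
  have S: "Ssum i \<le> (a + 1) * ((a + 1) + (a + 2) ^ 3)" using SS ennreal_le_iff[OF nn] by blast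
  have "(a + 1) * ((a + 1) + (a + 2) ^ 3) \<le> (a + 2) * ((a + 2) ^ 3 + (a + 2) ^ 3)"
  proof (intro mult_mono add_mono)
    have "a + 1 \<le> (a + 2) ^ 1" by simp
    also have "\<dots> \<le> (a + 2) ^ 3" using a1 by (intro power_increasing) auto
    finally show "a + 1 \<le> (a + 2) ^ 3" .
  qed (use a1 in auto)
  also have "\<dots> = 2 * (a + 2) ^ 4" by (simp add: algebra_simps power_def)
  finally have "real i \<le> 40 * (a + 2) ^ 4" using S H2[OF i(1)] by linarith
  then have "ln (real i) \<le> ln (40 * (a + 2) ^ 4)" using i a1 by (intro ln_mono) auto
  also have "\<dots> = ln 40 + 4 * ln (a + 2)" using a1 by (simp add: ln_mult ln_realpow)
  also have "ln (40::real) \<le> 39" using ln_le_minus_one[of 40] by simp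
  also have "ln (a + 2) \<le> 1 + ln a"
  proof -
    have "ln (a + 2) \<le> ln (2 * a)" using a2 by (intro ln_mono) auto
    also have "\<dots> = ln 2 + ln a" using a1 by (simp add: ln_mult)
    also have "ln (2::real) \<le> 1" using ln_le_minus_one[of 2] by simp
    finally show ?thesis by simp
  qed
  finally have "ln (real i) \<le> 39 + 4 * (1 + ln a)" by simp
  then have "2 * ln (real i) \<le> 2 * (39 + 4 * (1 + ln a))" by simp
  then have "e i \<le> 2 * (39 + 4 * (1 + ln a))" using H1[OF i(1)] by (rule_tac order_trans) auto
  also have "\<dots> \<le> 9 * ln a" using la by simp
  finally show ?thesis by (simp add: a_def)
qed

end

definition Lk :: "(nat \<Rightarrow> real) \<Rightarrow> nat \<Rightarrow> real" where
  "Lk th k = 1000 * mfun th (exp (real k)) / real k"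
definition wk :: "(nat \<Rightarrow> real) \<Rightarrow> nat \<Rightarrow> real" where
  "wk th k = 9 * (real k + 1) / Lk th k"
definition tk :: "nat \<Rightarrow> real" where
  "tk k = (real k + 1)\<^sup>2 / exp (real k + 1) - 9 * (real k + 1) / exp (real k)"
definition Jk :: "(nat \<Rightarrow> real) \<Rightarrow> nat \<Rightarrow> nat" where
  "Jk th k = nat \<lceil>exp (real k + 1) / wk th k\<rceil>"
definition uk :: "(nat \<Rightarrow> real) \<Rightarrow> nat \<Rightarrow> nat \<Rightarrow> real" where
  "uk th k j = exp (real k) + real j * wk th k"

lemma tk_nonneg: assumes "100 \<le> k" shows "0 \<le> tk k"
proof -
  have e3: "exp 1 \<le> (3::real)" by (rule exp_le)
  have k: "27 \<le> real k + 1" using assms by simp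
  have "9 * (real k + 1) * exp 1 \<le> (real k + 1) * (real k + 1)"
  proof -
    have "9 * (real k + 1) * exp 1 \<le> 9 * (real k + 1) * 3" using e3 by (intro mult_left_mono) auto
    also have "\<dots> = 27 * (real k + 1)" by simp
    also have "\<dots> \<le> (real k + 1) * (real k + 1)" using k by (intro mult_right_mono) auto
    finally show ?thesis .
  qed
  then have "9 * (real k + 1) / exp (real k) \<le> (real k + 1)\<^sup>2 / exp (real k + 1)"
    by (simp add: exp_add divide_simps power2_eq_square mult_ac)
  then show ?thesis by (simp add: tk_def)
qed

context detsetup begin

lemma th_mono: assumes "1 \<le> i" "i \<le> j" shows "\<theta> j \<le> \<theta> i"
proof -
  have st: "\<And>n. 1 \<le> n \<Longrightarrow> \<theta> (Suc n) \<le> \<theta> n" using Om by (simp add: Omega_param_def)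
  show ?thesis using assms(2)
  proof (induction j rule: dec_induct)
    case base then show ?case by simp
  next
    case (step n) then show ?case using \<open>1 \<le> i\<close> st[of n] by linarith
  qed
qed

lemma AS_zero: assumes "\<theta> 1 = 0" shows "AS \<theta> x W = 0"
proof -
  have "\<theta> (Suc i) = 0" for i using th_mono[of 1 "Suc i"] th_nonneg[of "Suc i"] assms by simp
  then show ?thesis by (simp add: AS_def)
qed

lemma AS_empty: "AS \<theta> x {} = 0" by (simp add: AS_def)

lemma mass_block:
  fixes k i :: nat
  assumes k: "100 \<le> k" and a: "exp (real k) \<le> Y i" "Y i < exp (real k + 1)"
    and ei: "e i \<le> 9 * (real k + 1)"
    and mpos: "0 < \<theta> 1 \<Longrightarrow> 0 < mfun \<theta> (exp (real k))"
    and H4: "0 < \<theta> 1 \<Longrightarrow> ennreal (Lk \<theta> k) \<le> AS \<theta> x {0..exp (real k)}"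
    and H5: "\<And>j. j \<le> Jk \<theta> k \<Longrightarrow> AS \<theta> x {uk \<theta> k j <.. uk \<theta> k j + 2 * wk \<theta> k} \<le> ennreal (tk k)"
  shows "mu_Ioc \<theta> x (Y i) (Y (Suc i)) \<le> ennreal ((real k + 1)\<^sup>2 / exp (real k + 1))"
proof -
  define a where "a = Y i"
  define b where "b = Y (Suc i)"
  have apos: "0 < a" using a(1) unfolding a_def by (smt (verit) exp_gt_zero)
  have tk0: "0 \<le> tk k" using k by (rule tk_nonneg)
  have target: "9 * (real k + 1) / exp (real k) + tk k = (real k + 1)\<^sup>2 / exp (real k + 1)"
    by (simp add: tk_def)
  have nn9: "0 \<le> 9 * (real k + 1) / exp (real k)" by simp
  show ?thesis
  proof (cases "b \<le> a")
    case True
    then have "mu_Ioc \<theta> x a b = 0" by (simp add: mu_Ioc_AS AS_empty ennreal_eq_0_iff mult_nonneg_nonpos)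
    then show ?thesis by (simp add: a_def b_def)
  next
    case False
    then have ab: "a < b" by simp
    have diff: "(\<theta> 0)\<^sup>2 * (b - a) \<le> 9 * (real k + 1) / exp (real k)"
    proof -
      have "(b - a) * ((\<theta> 0)\<^sup>2 * a) \<le> e i"
        unfolding a_def b_def using apos by (intro gap diff_le_mu) (auto simp: a_def)
      then have "(\<theta> 0)\<^sup>2 * (b - a) * a \<le> 9 * (real k + 1)" using ei by (simp add: mult_ac)
      then have "(\<theta> 0)\<^sup>2 * (b - a) \<le> 9 * (real k + 1) / a" using apos by (simp add: field_simps)
      also have "\<dots> \<le> 9 * (real k + 1) / exp (real k)"
        using a(1) apos by (intro divide_left_mono) (auto simp: a_def)
      finally show ?thesis .
    qed
    have atoms: "AS \<theta> x {a<..b} \<le> ennreal (tk k)"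
    proof (cases "0 < \<theta> 1")
      case False
      then have "\<theta> 1 = 0" using th_nonneg[of 1] by simp
      then show ?thesis by (simp add: AS_zero)
    next
      case True
      have m: "0 < mfun \<theta> (exp (real k))" using mpos True by simp
      have L: "0 < Lk \<theta> k" using m k by (simp add: Lk_def)
      have w: "0 < wk \<theta> k" using L by (simp add: wk_def)
      have "ennreal (Lk \<theta> k) \<le> AS \<theta> x {0..exp (real k)}" using H4 True by simp
      also have "\<dots> \<le> AS \<theta> x {0..a}" using a(1) by (intro AS_mono th_nonneg) (auto simp: a_def)
      also have "\<dots> \<le> mu a" by (rule AS_le_mu)
      finally have "ennreal (Lk \<theta> k) \<le> mu a" .
      then have "(b - a) * Lk \<theta> k \<le> e i" unfolding a_def b_def using L by (intro gap) auto
      then have "(b - a) * Lk \<theta> k \<le> 9 * (real k + 1)" using ei by simp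
      then have bw: "b - a \<le> wk \<theta> k" using L by (simp add: wk_def field_simps)
      define q where "q = (a - exp (real k)) / wk \<theta> k"
      have q0: "0 \<le> q" using a(1) w by (simp add: q_def a_def)
      define j where "j = nat \<lfloor>q\<rfloor>"
      have jq: "real j \<le> q" "q < real j + 1" using q0 by (simp_all add: j_def)
      define u where "u = uk \<theta> k j"
      have u1: "u \<le> a"
      proof -
        have "real j * wk \<theta> k \<le> q * wk \<theta> k" using jq w by (intro mult_right_mono) auto
        then show ?thesis using w by (simp add: u_def uk_def q_def)
      qed
      have u2: "a < u + wk \<theta> k"
      proof -
        have qw: "q * wk \<theta> k = a - exp (real k)" using w by (simp add: q_def)
        have "q * wk \<theta> k < (real j + 1) * wk \<theta> k" using jq w by (intro mult_strict_right_mono) auto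
        then have "a - exp (real k) < (real j + 1) * wk \<theta> k" using qw by simp
        then show ?thesis by (simp add: u_def uk_def algebra_simps)
      qed
      have sub: "{a<..b} \<subseteq> {u<..u + 2 * wk \<theta> k}" using u1 u2 bw by auto
      have jJ: "j \<le> Jk \<theta> k"
      proof -
        have ae: "a - exp (real k) \<le> exp (real k + 1)"
          using a(2) exp_gt_zero[of "real k"] unfolding a_def by linarith
        have "q \<le> exp (real k + 1) / wk \<theta> k"
          unfolding q_def using w ae by (intro divide_right_mono) auto
        then have "real j \<le> exp (real k + 1) / wk \<theta> k" using jq by linarith
        then show ?thesis unfolding Jk_def by linarith
      qed
      have "AS \<theta> x {a<..b} \<le> AS \<theta> x {u<..u + 2 * wk \<theta> k}" using sub by (intro AS_mono th_nonneg)
      also have "\<dots> \<le> ennreal (tk k)" unfolding u_def by (rule H5[OF jJ])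
      finally show ?thesis .
    qed
    have "mu_Ioc \<theta> x a b = ennreal ((\<theta> 0)\<^sup>2 * (b - a)) + AS \<theta> x {a<..b}" by (rule mu_Ioc_AS)
    also have "\<dots> \<le> ennreal (9 * (real k + 1) / exp (real k)) + ennreal (tk k)"
      using diff atoms by (intro add_mono ennreal_leI) auto
    also have "\<dots> = ennreal ((real k + 1)\<^sup>2 / exp (real k + 1))"
      using tk0 nn9 target by (simp flip: ennreal_plus)
    finally show ?thesis by (simp add: a_def b_def)
  qed
qed

end

context detsetup begin

lemma AS_ge_th1: assumes "0 \<le> x 1" "x 1 \<le> l" shows "ennreal (\<theta> 1) \<le> AS \<theta> x {0..l}"
proof -
  have "ennreal (\<theta> 1) = (\<Sum>i\<in>{0}. ennreal (\<theta> (Suc i) * indicator {0..l} (x (Suc i))))"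
    using assms by simp
  also have "\<dots> \<le> AS \<theta> x {0..l}"
    unfolding AS_def by (rule sum_le_suminf) (auto simp: summableI)
  finally show ?thesis .
qed

theorem det_main:
  fixes N :: nat
  assumes N1: "1 \<le> N"
    and H1: "\<And>i. N \<le> i \<Longrightarrow> e i \<le> 2 * ln (real i)"
    and H2: "\<And>i. N \<le> i \<Longrightarrow> real i / 20 \<le> Ssum i"
    and H3: "\<And>n. N \<le> n \<Longrightarrow> AS \<theta> x {0..real n} < ennreal (real n ^ 3)"
    and mpos: "\<And>k. 1 \<le> k \<Longrightarrow> 0 < \<theta> 1 \<Longrightarrow> 0 < mfun \<theta> (exp (real k))"
    and H4: "\<And>k. N \<le> k \<Longrightarrow> 0 < \<theta> 1 \<Longrightarrow> real k * \<theta> 1 < 1000 * mfun \<theta> (exp (real k)) \<Longrightarrow>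
               ennreal (Lk \<theta> k) \<le> AS \<theta> x {0..exp (real k)}"
    and H5: "\<And>k j. N \<le> k \<Longrightarrow> j \<le> Jk \<theta> k \<Longrightarrow> AS \<theta> x {uk \<theta> k j <.. uk \<theta> k j + 2 * wk \<theta> k} \<le> ennreal (tk k)"
  shows "\<exists>L0\<ge>0. \<forall>l\<ge>L0. \<forall>i. l \<le> Y i \<longrightarrow> mu_Ioc \<theta> x (Y i) (Y (Suc i)) \<le> ennreal ((ln l)\<^sup>2 / l)"
proof -
  define k1 :: nat where "k1 = nat \<lceil>x 1\<rceil>"
  have k1: "x 1 \<le> exp (real k1)"
  proof -
    have "x 1 \<le> real k1" unfolding k1_def by linarith
    also have "\<dots> \<le> exp (real k1)" using exp_ge_add_one_self[of "real k1"] by linarith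
    finally show ?thesis .
  qed
  define K0 :: nat where "K0 = N + k1 + 100"
  define L0 where "L0 = max (exp (real K0)) (Max (Y ` {..<N}) + 1)"
  have L0e: "exp (real K0) \<le> L0" by (simp add: L0_def)
  have L0Y: "Y j < L0" if "j < N" for j
  proof -
    have "Y j \<le> Max (Y ` {..<N})" using that by (intro Max_ge) auto
    then show ?thesis unfolding L0_def by linarith
  qed
  have L0pos: "0 \<le> L0" using L0e exp_gt_zero[of "real K0"] by linarith
  have main: "mu_Ioc \<theta> x (Y i) (Y (Suc i)) \<le> ennreal ((ln l)\<^sup>2 / l)" if l: "L0 \<le> l" "l \<le> Y i" for l i
  proof -
    define a where "a = Y i"
    have aL: "L0 \<le> a" using l by (simp add: a_def)
    have iN: "N \<le> i"
    proof (rule ccontr)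
      assume "\<not> N \<le> i"
      then have "Y i < L0" by (intro L0Y) simp
      then show False using aL by (simp add: a_def)
    qed
    have aK: "exp (real K0) \<le> a" using aL L0e by linarith
    have apos: "0 < a" using aK exp_gt_zero[of "real K0"] by linarith
    have la: "real K0 \<le> ln a" using aK apos by (metis ln_exp ln_le_cancel_iff exp_gt_zero)
    define k where "k = nat \<lfloor>ln a\<rfloor>"
    have kK: "K0 \<le> k" using la unfolding k_def by linarith
    have k1': "real k \<le> ln a" "ln a < real k + 1" using la unfolding k_def by linarith+
    have ak: "exp (real k) \<le> a" "a < exp (real k + 1)"
      using k1' apos by (metis exp_le_cancel_iff exp_ln, metis exp_less_cancel_iff exp_ln)
    have k100: "100 \<le> k" using kK by (simp add: K0_def)
    have kN: "N \<le> k" using kK by (simp add: K0_def)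
    have e100: "exp 100 \<le> a"
    proof -
      have "exp 100 \<le> exp (real K0)" by (simp add: K0_def)
      then show ?thesis using aK by linarith
    qed
    have aN: "real N \<le> a"
    proof -
      have "real N \<le> real K0" by (simp add: K0_def)
      also have "\<dots> \<le> exp (real K0)" using exp_ge_add_one_self[of "real K0"] by linarith
      finally show ?thesis using aK by linarith
    qed
    have ei: "e i \<le> 9 * (real k + 1)"
    proof -
      have "e i \<le> 9 * ln (Y i)" using H1 H2 H3 iN N1 e100 aN by (intro e_bound[of N]) (auto simp: a_def)
      then show ?thesis using k1' by (simp add: a_def)
    qed
    have H4': "ennreal (Lk \<theta> k) \<le> AS \<theta> x {0..exp (real k)}" if th: "0 < \<theta> 1"
    proof (cases "real k * \<theta> 1 < 1000 * mfun \<theta> (exp (real k))")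
      case True then show ?thesis using H4[OF kN th] by simp
    next
      case False
      have "Lk \<theta> k \<le> \<theta> 1" using False k100 by (simp add: Lk_def field_simps)
      then have "ennreal (Lk \<theta> k) \<le> ennreal (\<theta> 1)" by (rule ennreal_leI)
      also have "\<dots> \<le> AS \<theta> x {0..exp (real k)}"
      proof (rule AS_ge_th1)
        show "0 \<le> x 1" using x1 th by simp
        have "exp (real k1) \<le> exp (real k)" using kK by (simp add: K0_def)
        then show "x 1 \<le> exp (real k)" using k1 by linarith
      qed
      finally show ?thesis .
    qed
    have "mu_Ioc \<theta> x (Y i) (Y (Suc i)) \<le> ennreal ((real k + 1)\<^sup>2 / exp (real k + 1))"
      using k100 ak ei mpos H4' H5 kN k100 by (intro mass_block) (auto simp: a_def)
    also have "(real k + 1)\<^sup>2 / exp (real k + 1) \<le> (ln l)\<^sup>2 / l"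
    proof -
      have e2: "exp 2 \<le> l"
      proof -
        have "exp 2 \<le> exp (real K0)" by (simp add: K0_def)
        then show ?thesis using L0e l by linarith
      qed
      have "(real k + 1)\<^sup>2 / exp (real k + 1) = (ln (exp (real k + 1)))\<^sup>2 / exp (real k + 1)" by simp
      also have "\<dots> \<le> (ln a)\<^sup>2 / a" using e2 l ak by (intro ln_sq_div_decr) (auto simp: a_def)
      also have "\<dots> \<le> (ln l)\<^sup>2 / l" using e2 l by (intro ln_sq_div_decr) (auto simp: a_def)
      finally show ?thesis .
    qed
    then have "ennreal ((real k + 1)\<^sup>2 / exp (real k + 1)) \<le> ennreal ((ln l)\<^sup>2 / l)" by (rule ennreal_leI)
    finally show ?thesis .
  qed
  show ?thesis using L0pos main by blast
qed

end

lemma (in prob_space) BC: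
  assumes A: "\<And>n. A n \<in> events" and b: "\<And>n. prob (A n) \<le> b n" and s: "summable b"
  shows "AE \<omega> in M. \<exists>N. \<forall>n\<ge>N. \<omega> \<notin> A n"
proof -
  have "summable (\<lambda>n. measure M (A n))"
    by (rule summable_comparison_test'[OF s, of 0]) (use b in auto)
  then have "AE x in M. eventually (\<lambda>n. x \<in> space M - A n) sequentially"
    by (intro borel_cantelli_AE1 A) (auto simp: emeasure_eq_measure)
  then show ?thesis
    by eventually_elim (auto simp: eventually_sequentially)
qed

context cutsetup begin

definition "A1 i = {\<omega>\<in>space M. 2 * ln (real (Suc i)) < E (Suc i) \<omega>}"
definition "A2 i = {\<omega>\<in>space M. (\<Sum>j<i. E j \<omega>) < real i / 20}"
definition "A3 n = {\<omega>\<in>space M. ennreal (real (Suc n) ^ 3) \<le> AS \<theta> (\<lambda>n. X n \<omega>) {0..real (Suc n)}}"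
definition "A4 k = (if 0 < \<theta> 1 \<and> 1 \<le> k \<and> real k * \<theta> 1 < 1000 * mfun \<theta> (exp (real k))
   then {\<omega>\<in>space M. AS \<theta> (\<lambda>n. X n \<omega>) {0..exp (real k)} < ennreal (Lk \<theta> k)} else {})"
definition "A5 k = (if 100 \<le> k then (\<Union>j\<in>{..Jk \<theta> k}.
   {\<omega>\<in>space M. ennreal (tk k) < AS \<theta> (\<lambda>n. X n \<omega>) {uk \<theta> k j <.. uk \<theta> k j + 2 * wk \<theta> k}}) else {})"

lemma A1_ev: "A1 i \<in> events" unfolding A1_def by measurable
lemma A2_ev: "A2 i \<in> events" unfolding A2_def by measurable
lemma A3_ev: "A3 i \<in> events" unfolding A3_def by measurable
lemma A4_ev: "A4 i \<in> events"
proof -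
  have "{\<omega>\<in>space M. AS \<theta> (\<lambda>n. X n \<omega>) {0..exp (real i)} < ennreal c} \<in> events" for c by measurable
  then show ?thesis unfolding A4_def by auto
qed
lemma A5_ev: "A5 i \<in> events"
proof -
  have "{\<omega>\<in>space M. ennreal (tk i) < AS \<theta> (\<lambda>n. X n \<omega>) {uk \<theta> i j <.. uk \<theta> i j + 2 * wk \<theta> i}} \<in> events" for j
    by measurable
  then have "(\<Union>j\<in>{..Jk \<theta> i}. {\<omega>\<in>space M. ennreal (tk i) < AS \<theta> (\<lambda>n. X n \<omega>) {uk \<theta> i j <.. uk \<theta> i j + 2 * wk \<theta> i}}) \<in> events"
    by (intro sets.finite_UN) auto
  then show ?thesis unfolding A5_def by auto
qed

lemma A1_AE: "AE \<omega> in M. \<exists>N. \<forall>n\<ge>N. \<omega> \<notin> A1 n"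
proof (rule BC[OF A1_ev])
  show "prob (A1 n) \<le> inverse (real (Suc n) ^ 2)" for n
    unfolding A1_def by (subst E_tail_ln) (auto simp: divide_inverse)
  show "summable (\<lambda>n. inverse (real (Suc n) ^ 2))"
    using inverse_power_summable[of 2, where 'a=real] by (subst summable_Suc_iff) simp
qed

lemma A2_AE: "AE \<omega> in M. \<exists>N. \<forall>n\<ge>N. \<omega> \<notin> A2 n"
proof (rule BC[OF A2_ev])
  show "prob (A2 n) \<le> (140/171) ^ n" for n unfolding A2_def by (rule S_lower)
  show "summable (\<lambda>n. (140/171::real) ^ n)" by (rule summable_geometric) simp
qed

lemma A3_AE: "AE \<omega> in M. \<exists>N. \<forall>n\<ge>N. \<omega> \<notin> A3 n"
proof (rule BC[OF A3_ev])
  show "prob (A3 n) \<le> inverse (real (Suc n) ^ 2)" for n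
  proof -
    have "emeasure M (A3 n) \<le> ennreal (1 / (real (Suc n))\<^sup>2)"
      unfolding A3_def by (rule growth_prob) simp
    then show ?thesis by (simp add: emeasure_eq_measure divide_inverse ennreal_le_iff)
  qed
  show "summable (\<lambda>n. inverse (real (Suc n) ^ 2))"
    using inverse_power_summable[of 2, where 'a=real] by (subst summable_Suc_iff) simp
qed

end

lemma block_arith:
  fixes K m :: real
  assumes K: "100 \<le> K" and m: "0 \<le> m" "m \<le> exp K"
  defines "L \<equiv> 1000 * m / K"
  defines "w \<equiv> 9 * (K + 1) / L"
  defines "t \<equiv> (K + 1)\<^sup>2 / exp (K + 1) - 9 * (K + 1) / exp K"
  shows "(real (nat \<lceil>exp (K + 1) / w\<rceil>) + 1) * exp (- (exp K / 2) * t + 2 * w * m) \<le> 1002 * exp (- K)"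
proof -
  define y where "y = K + 1"
  have y: "101 \<le> y" using K by (simp add: y_def)
  have Ky: "K = y - 1" by (simp add: y_def)
  have w0: "0 \<le> w" using K m by (simp add: w_def L_def)
  have wm: "2 * w * m \<le> 18 * y * K / 1000"
  proof (cases "m = 0")
    case True then show ?thesis using K by (simp add: y_def)
  next
    case False
    then have wm1: "w * m = 9 * y * K / 1000" using K m by (simp add: w_def L_def y_def field_simps)
    have "2 * w * m = 2 * (w * m)" by simp
    also have "\<dots> = 18 * y * K / 1000" unfolding wm1 by simp
    finally show ?thesis by simp
  qed
  have et: "exp K / 2 * t = y\<^sup>2 / (2 * exp 1) - 9 * y / 2"
    by (simp add: t_def y_def exp_add field_simps power2_eq_square)
  have e3: "exp 1 \<le> (3::real)" by (rule exp_le)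
  have ysq: "y\<^sup>2 / 6 \<le> y\<^sup>2 / (2 * exp 1)"
    using e3 by (intro divide_left_mono) auto
  define Xb where "Xb = - (y\<^sup>2 / 6) + 9 * y / 2 + 18 * y * K / 1000"
  have X: "- (exp K / 2) * t + 2 * w * m \<le> Xb"
    using et ysq wm unfolding Xb_def by (simp add: algebra_simps) 
  have v0: "0 \<le> exp (K + 1) / w" using w0 by simp
  have v: "exp (K + 1) / w \<le> 1000 * exp (2 * K + 1)"
  proof (cases "m = 0")
    case True then show ?thesis by (simp add: w_def L_def)
  next
    case False
    then have mp: "0 < m" using m by simp
    have "exp (K + 1) / w = exp (K + 1) * m * (1000 / (9 * K * (K + 1)))"
      using K mp by (simp add: w_def L_def field_simps)
    also have "\<dots> \<le> exp (K + 1) * exp K * 1000"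
    proof (rule mult_mono)
      show "exp (K + 1) * m \<le> exp (K + 1) * exp K" using m by simp
      have kk: "100 * 1 \<le> K * (K + 1)" using K by (intro mult_mono) auto
      then have d: "1 \<le> 9 * K * (K + 1)" by simp
      have "1000 / (9 * K * (K + 1)) \<le> 1000 / 1" by (rule divide_left_mono) (use d in auto)
      then show "1000 / (9 * K * (K + 1)) \<le> 1000" by simp
    qed (use K m in auto)
    also have "exp (K + 1) * exp K = exp (2 * K + 1)" by (simp flip: exp_add)
    finally show ?thesis by simp
  qed
  have J: "real (nat \<lceil>exp (K + 1) / w\<rceil>) + 1 \<le> 1000 * exp (2 * K + 1) + 2"
    using v v0 by linarith
  have poly: "2 * K + 1 + Xb \<le> - K"
  proof -
    have P: "101 * y \<le> y * y" using y by (intro mult_right_mono) auto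
    have "2 * K + 1 + Xb = 2 * (y - 1) + 1 - (y * y) / 6 + 9 * y / 2 + 18 * (y * y - y) / 1000"
      unfolding Xb_def Ky by (simp add: power2_eq_square algebra_simps)
    also have "\<dots> \<le> - (y - 1)"
    proof -
      have gen: "\<And>Q. 101 * y \<le> Q \<Longrightarrow> 2 * (y - 1) + 1 - Q / 6 + 9 * y / 2 + 18 * (Q - y) / 1000 \<le> - (y - 1)"
        using y by (simp add: field_simps)
      show ?thesis by (rule gen[OF P])
    qed
    finally show ?thesis unfolding Ky .
  qed
  have "(real (nat \<lceil>exp (K + 1) / w\<rceil>) + 1) * exp (- (exp K / 2) * t + 2 * w * m)
      \<le> (1000 * exp (2 * K + 1) + 2) * exp Xb"
    using J X by (intro mult_mono) auto
  also have "\<dots> \<le> (1002 * exp (2 * K + 1)) * exp Xb"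
  proof -
    have "1 \<le> exp (2 * K + 1)" using K by simp
    then show ?thesis by (intro mult_right_mono) auto
  qed
  also have "\<dots> = 1002 * exp (2 * K + 1 + Xb)" by (simp add: exp_add)
  also have "\<dots> \<le> 1002 * exp (- K)" using poly by simp
  finally show ?thesis .
qed

context cutsetup begin

lemma A5_prob: "prob (A5 k) \<le> (if 100 \<le> k then 1002 * exp (-1) ^ k else 0)"
proof (cases "100 \<le> k")
  case False then show ?thesis by (simp add: A5_def)
next
  case True
  define m where "m = mfun \<theta> (exp (real k))"
  have m0: "0 \<le> m" "m \<le> exp (real k)" unfolding m_def by (intro m_nonneg m_le, simp)+
  have w0: "0 \<le> wk \<theta> k" using m0 by (simp add: wk_def Lk_def m_def)
  have t0: "0 \<le> tk k" using True by (rule tk_nonneg)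
  let ?B = "\<lambda>j. {\<omega>\<in>space M. ennreal (tk k) < AS \<theta> (\<lambda>n. X n \<omega>) {uk \<theta> k j <.. uk \<theta> k j + 2 * wk \<theta> k}}"
  have Bev: "?B j \<in> events" for j by measurable
  have "prob (A5 k) = prob (\<Union>j\<in>{..Jk \<theta> k}. ?B j)" using True by (simp add: A5_def)
  also have "\<dots> \<le> (\<Sum>j\<in>{..Jk \<theta> k}. prob (?B j))"
    by (rule finite_measure_subadditive_finite) (use Bev in auto)
  also have "\<dots> \<le> (\<Sum>j\<in>{..Jk \<theta> k}. exp (- (exp (real k) / 2) * tk k + 2 * wk \<theta> k * m))"
  proof (intro sum_mono)
    fix j
    have "prob (?B j) \<le> exp (- (exp (real k) / 2) * tk k + (2 * wk \<theta> k) * mfun \<theta> (exp (real k)))"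
      using w0 t0 by (intro window_prob) (auto simp: uk_def)
    then show "prob (?B j) \<le> exp (- (exp (real k) / 2) * tk k + 2 * wk \<theta> k * m)" by (simp add: m_def)
  qed
  also have "\<dots> = (real (Jk \<theta> k) + 1) * exp (- (exp (real k) / 2) * tk k + 2 * wk \<theta> k * m)"
    by simp
  also have "\<dots> \<le> 1002 * exp (- real k)"
    using block_arith[of "real k" m] True m0 unfolding Jk_def wk_def Lk_def tk_def m_def by simp
  also have "exp (- real k) = exp (-1) ^ k" by (simp flip: exp_of_nat_mult)
  finally show ?thesis using True by simp
qed

lemma A5_AE: "AE \<omega> in M. \<exists>N. \<forall>n\<ge>N. \<omega> \<notin> A5 n"
proof (rule BC[OF A5_ev A5_prob])
  show "summable (\<lambda>k. if 100 \<le> k then 1002 * exp (-1::real) ^ k else 0)"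
    by (rule summable_comparison_test'[where g="\<lambda>k. 1002 * exp (-1::real) ^ k" and N=0])
       (auto intro!: summable_mult summable_geometric)
qed

lemma A4_prob: "prob (A4 k) \<le> (if 4000 \<le> k then exp (- 1 / 4000) ^ k else 1)"
proof (cases "0 < \<theta> 1 \<and> 1 \<le> k \<and> real k * \<theta> 1 < 1000 * mfun \<theta> (exp (real k))")
  case False
  then have "A4 k = {}" unfolding A4_def by (intro if_not_P) blast
  then show ?thesis by simp
next
  case True
  then have th: "0 < \<theta> 1" and k1: "1 \<le> k" and km: "real k * \<theta> 1 < 1000 * mfun \<theta> (exp (real k))" by auto
  show ?thesis
  proof (cases "4000 \<le> k")
    case False then show ?thesis by simp
  next
    case big: True
    define m where "m = mfun \<theta> (exp (real k))"
    have m0: "0 \<le> m" unfolding m_def by (intro m_nonneg) simp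
    have eqA: "A4 k = {\<omega>\<in>space M. AS \<theta> (\<lambda>n. X n \<omega>) {0..exp (real k)} < ennreal (Lk \<theta> k)}"
      using True unfolding A4_def by (intro if_P) blast
    have "prob (A4 k) \<le> exp (Lk \<theta> k / \<theta> 1 - m / (2 * \<theta> 1))"
      unfolding eqA m_def by (rule lower_prob[OF th]) simp
    also have "Lk \<theta> k / \<theta> 1 - m / (2 * \<theta> 1) \<le> - (real k / 4000)"
    proof -
      have "Lk \<theta> k / \<theta> 1 = (1000 / real k) * (m / \<theta> 1)" by (simp add: Lk_def m_def)
      also have "\<dots> \<le> (1 / 4) * (m / \<theta> 1)"
        using big th m0 by (intro mult_right_mono) (auto simp: field_simps)
      finally have a: "Lk \<theta> k / \<theta> 1 \<le> (1 / 4) * (m / \<theta> 1)" .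
      have b: "real k / 1000 < m / \<theta> 1" using km th by (simp add: m_def field_simps)
      have c: "m / (2 * \<theta> 1) = (1/2) * (m / \<theta> 1)" by simp
      show ?thesis using a b c by linarith
    qed
    also have "exp (- (real k / 4000)) = exp (- 1 / 4000) ^ k"
      by (simp flip: exp_of_nat_mult)
    finally show ?thesis using big by simp
  qed
qed

lemma A4_AE: "AE \<omega> in M. \<exists>N. \<forall>n\<ge>N. \<omega> \<notin> A4 n"
proof (rule BC[OF A4_ev A4_prob])
  show "summable (\<lambda>k. if 4000 \<le> k then exp (- 1 / 4000 :: real) ^ k else 1)"
  proof (rule summable_comparison_test'[where g="\<lambda>k. exp (- 1 / 4000 :: real) ^ k" and N=4000])
    show "summable (\<lambda>k. exp (- 1 / 4000 :: real) ^ k)" by (rule summable_geometric) simp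
  qed simp
qed

end

context cutsetup begin

theorem main_AE:
  "AE \<omega> in M. \<exists>L0\<ge>0. \<forall>l\<ge>L0. \<forall>i.
           cuts \<theta> (\<lambda>n. X n \<omega>) (\<lambda>n. E n \<omega>) i \<ge> l \<longrightarrow>
           mu_Ioc \<theta> (\<lambda>n. X n \<omega>) (cuts \<theta> (\<lambda>n. X n \<omega>) (\<lambda>n. E n \<omega>) i)
                  (cuts \<theta> (\<lambda>n. X n \<omega>) (\<lambda>n. E n \<omega>) (Suc i))
             \<le> ennreal ((ln l)\<^sup>2 / l)"
proof -
  have AX: "AE \<omega> in M. 0 < \<theta> 1 \<longrightarrow> 0 \<le> X 1 \<omega>"
  proof (cases "0 < \<theta> 1")
    case True
    show ?thesis using X_nonneg_AE[OF _ True] by simp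
  qed simp
  have AE0: "AE \<omega> in M. \<forall>j. 0 \<le> E j \<omega>"
    by (subst AE_all_countable) (simp add: E_nonneg_AE)
  show ?thesis
    using AE_space A1_AE A2_AE A3_AE A4_AE A5_AE AX AE0
  proof eventually_elim
    case (elim \<omega>)
    note sp = elim(1)
    obtain N1 where N1: "\<And>n. N1 \<le> n \<Longrightarrow> \<omega> \<notin> A1 n" using elim(2) by blast
    obtain N2 where N2: "\<And>n. N2 \<le> n \<Longrightarrow> \<omega> \<notin> A2 n" using elim(3) by blast
    obtain N3 where N3: "\<And>n. N3 \<le> n \<Longrightarrow> \<omega> \<notin> A3 n" using elim(4) by blast
    obtain N4 where N4: "\<And>n. N4 \<le> n \<Longrightarrow> \<omega> \<notin> A4 n" using elim(5) by blast
    obtain N5 where N5: "\<And>n. N5 \<le> n \<Longrightarrow> \<omega> \<notin> A5 n" using elim(6) by blast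
    interpret D: detsetup \<theta> "\<lambda>n. X n \<omega>" "\<lambda>n. E n \<omega>"
      using Om elim(7) elim(8) by unfold_locales auto
    define N where "N = N1 + N2 + N3 + N4 + N5 + 100"
    have "\<exists>L0\<ge>0. \<forall>l\<ge>L0. \<forall>i. l \<le> D.Y i \<longrightarrow> mu_Ioc \<theta> (\<lambda>n. X n \<omega>) (D.Y i) (D.Y (Suc i)) \<le> ennreal ((ln l)\<^sup>2 / l)"
    proof (rule D.det_main[of N])
      show "1 \<le> N" by (simp add: N_def)
    next
      fix i assume i: "N \<le> i"
      then obtain i' where i': "i = Suc i'" "N1 \<le> i'" by (cases i) (auto simp: N_def)
      have "\<omega> \<notin> A1 i'" using N1 i' by simp
      then show "E i \<omega> \<le> 2 * ln (real i)" using sp i' by (auto simp: A1_def not_less)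
    next
      fix i assume i: "N \<le> i"
      then have "\<omega> \<notin> A2 i" using N2 by (simp add: N_def)
      then show "real i / 20 \<le> D.Ssum i" using sp by (auto simp: A2_def D.Ssum_def not_less)
    next
      fix n assume n: "N \<le> n"
      then obtain n' where n': "n = Suc n'" "N3 \<le> n'" by (cases n) (auto simp: N_def)
      have "\<omega> \<notin> A3 n'" using N3 n' by simp
      then show "AS \<theta> (\<lambda>n. X n \<omega>) {0..real n} < ennreal (real n ^ 3)"
        using sp n' by (auto simp: A3_def not_le)
    next
      fix k :: nat assume "1 \<le> k" "0 < \<theta> 1"
      then show "0 < mfun \<theta> (exp (real k))" by (intro m_pos) auto
    next
      fix k :: nat assume k: "N \<le> k" and th: "0 < \<theta> 1" and km: "real k * \<theta> 1 < 1000 * mfun \<theta> (exp (real k))"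
      have "\<omega> \<notin> A4 k" using N4 k by (simp add: N_def)
      moreover have "1 \<le> k" using k by (simp add: N_def)
      ultimately show "ennreal (Lk \<theta> k) \<le> AS \<theta> (\<lambda>n. X n \<omega>) {0..exp (real k)}"
        using sp th km by (auto simp: A4_def not_less)
    next
      fix k j assume k: "N \<le> k" and j: "j \<le> Jk \<theta> k"
      have "\<omega> \<notin> A5 k" using N5 k by (simp add: N_def)
      moreover have "100 \<le> k" using k by (simp add: N_def)
      ultimately show "AS \<theta> (\<lambda>n. X n \<omega>) {uk \<theta> k j <.. uk \<theta> k j + 2 * wk \<theta> k} \<le> ennreal (tk k)"
        using sp j by (auto simp: A5_def not_less)
    qed
    then show ?case by simp
  qed
qed

end

theorem mainTheorem12:
  fixes M :: "'a measure" and \<theta> :: "nat \<Rightarrow> real"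
    and X :: "nat \<Rightarrow> 'a \<Rightarrow> real" and E :: "nat \<Rightarrow> 'a \<Rightarrow> real"
  assumes "prob_space M"
    and "Omega_param \<theta>"
    and "\<And>i. i \<ge> 1 \<Longrightarrow> 0 < \<theta> i \<Longrightarrow> distributed M lborel (X i) (exponential_density (\<theta> i))"
    and "\<And>i. i \<ge> 1 \<Longrightarrow> X i \<in> borel_measurable M"
    and "\<And>j. distributed M lborel (E j) (exponential_density 1)"
    and "prob_space.indep_vars M (\<lambda>_. borel)
           (\<lambda>k. case k of Inl i \<Rightarrow> X i | Inr j \<Rightarrow> E j) (Inl ` {1..} \<union> Inr ` UNIV)"
  shows "AE \<omega> in M. \<exists>L0\<ge>0. \<forall>l\<ge>L0. \<forall>i.
           cuts \<theta> (\<lambda>n. X n \<omega>) (\<lambda>n. E n \<omega>) i \<ge> l \<longrightarrow>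
           mu_Ioc \<theta> (\<lambda>n. X n \<omega>) (cuts \<theta> (\<lambda>n. X n \<omega>) (\<lambda>n. E n \<omega>) i)
                  (cuts \<theta> (\<lambda>n. X n \<omega>) (\<lambda>n. E n \<omega>) (Suc i))
             \<le> ennreal ((ln l)\<^sup>2 / l)"
proof -
  interpret cutsetup M \<theta> X E
    using assms by (simp add: cutsetup_def cutsetup_axioms_def)
  show ?thesis by (rule main_AE)
qed

end
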